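(* Let $n,m\ge1$, $\eta>0$, $t\in(0,1)$, let $f_i:\mathbb{R}^d\to\mathbb{R}$ ($i=1,\dots,n$) be $\alpha_{f_i}$-strongly convex and $g_j:\mathbb{R}^d\to\mathbb{R}$ ($j=1,\dots,m$) be $\alpha_{g_j}$-strongly convex, and let $\sigma_{ij}\in[0,1]$ with $\sum_{i}\sigma_{ij}>0$ for every $j$ and $\sum_j\sigma_{ij}>0$ for every $i$. For $\mathbf x=(x_1,\dots,x_n)$, $\mathbf y=(y_1,\dots,y_m)$, $\mathbf z=(z^1,\dots,z^m)$ with all components in $\mathbb{R}^d$, define $$\pi_t(\mathbf x,\mathbf y,\mathbf z)\propto\exp\Big[-\sum_{i=1}^nf_i(x_i)-\sum_{j=1}^mg_j(y_j)-\sum_{i,j}\frac{\sigma_{ij}}{2\eta}\|x_i-y_j\|_2^2-\sum_{j=1}^m\frac{\sum_{i=1}^n\sigma_{ij}}{2t(1-t)\eta}\Big\|z^j-ty_j-(1-t)\frac{\sum_{i=1}^n\sigma_{ij}x_i}{\sum_{i=1}^n\sigma_{ij}}\Big\|_2^2\Big].$$ Then the $\mathbf z$-marginal $\pi_t(\mathbf z)\propto\int\pi_t(\mathbf x,\mathbf y,\mathbf z)\,\mathrm d\mathbf x\,\mathrm d\mathbf y$ is strongly log-concave with constant $$c_t=\Big[\frac{\eta t(1-t)}{\min_j\sum_{i=1}^n\sigma_{ij}}+\frac{mn(1-t)^2}{\min_i\alpha_{f_i}}+\frac{t^2}{\min_j\alpha_{g_j}}\Big]^{-1}.$$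
   Context: A density $p$ is strongly log-concave with constant $c>0$ if $-\log p$ is $c$-strongly convex, i.e. $-\log p(x)+\log p(y)\ge \langle -\nabla\log p(y),x-y\rangle+\frac c2\|x-y\|^2$ for all $x,y$. *)

theory Defs
  imports "HOL-Analysis.Analysis"
begin

definition strongly_convex :: "real \<Rightarrow> ('a::real_inner \<Rightarrow> real) \<Rightarrow> bool" where
  "strongly_convex c f \<longleftrightarrow>
     (\<forall>u v s. 0 \<le> s \<and> s \<le> 1 \<longrightarrow>
        f (s *\<^sub>R u + (1 - s) *\<^sub>R v)
          \<le> s * f u + (1 - s) * f v - c / 2 * s * (1 - s) * (norm (u - v))\<^sup>2)"

definition strongly_log_concave :: "real \<Rightarrow> ('a::real_inner \<Rightarrow> real) \<Rightarrow> bool" where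
  "strongly_log_concave c p \<longleftrightarrow> c > 0 \<and> (\<forall>z. p z > 0) \<and> strongly_convex c (\<lambda>z. - ln (p z))"

text \<open>Potential (negative log of the unnormalised joint density) of pi_t.
  Points x = (x_i)_{i::'n}, y = (y_j)_{j::'m}, z = (z^j)_{j::'m} in R^d = 'a.\<close>
definition potential_t ::
  "real \<Rightarrow> real \<Rightarrow> ('n::finite \<Rightarrow> 'm::finite \<Rightarrow> real) \<Rightarrow> ('n \<Rightarrow> 'a::euclidean_space \<Rightarrow> real)
    \<Rightarrow> ('m \<Rightarrow> 'a \<Rightarrow> real) \<Rightarrow> 'a^'n \<Rightarrow> 'a^'m \<Rightarrow> 'a^'m \<Rightarrow> real" where
  "potential_t \<eta> t \<sigma> f g x y z =
     (\<Sum>i\<in>UNIV. f i (x $ i)) + (\<Sum>j\<in>UNIV. g j (y $ j))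
     + (\<Sum>i\<in>UNIV. \<Sum>j\<in>UNIV. \<sigma> i j / (2 * \<eta>) * (norm (x $ i - y $ j))\<^sup>2)
     + (\<Sum>j\<in>UNIV. (\<Sum>i\<in>UNIV. \<sigma> i j) / (2 * t * (1 - t) * \<eta>) *
          (norm (z $ j - t *\<^sub>R y $ j
                 - (1 - t) *\<^sub>R ((1 / (\<Sum>i\<in>UNIV. \<sigma> i j)) *\<^sub>R (\<Sum>i\<in>UNIV. \<sigma> i j *\<^sub>R x $ i))))\<^sup>2)"

definition z_marginal ::
  "real \<Rightarrow> real \<Rightarrow> ('n::finite \<Rightarrow> 'm::finite \<Rightarrow> real) \<Rightarrow> ('n \<Rightarrow> 'a::euclidean_space \<Rightarrow> real)
    \<Rightarrow> ('m \<Rightarrow> 'a \<Rightarrow> real) \<Rightarrow> 'a^'m \<Rightarrow> real" where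
  "z_marginal \<eta> t \<sigma> f g z =
     enn2real (\<integral>\<^sup>+ xy. ennreal (exp (- potential_t \<eta> t \<sigma> f g (fst xy) (snd xy) z)) \<partial>lborel)
     / enn2real (\<integral>\<^sup>+ xyz. ennreal (exp (- potential_t \<eta> t \<sigma> f g (fst xyz) (fst (snd xyz)) (snd (snd xyz)))) \<partial>lborel)"

end

theory Submission
  imports Defs "HOL-Probability.Distributions"
begin


lemma emeasure_diam_le:
  fixes S :: "real set"
  assumes "S \<noteq> {}" "\<And>a b. a \<in> S \<Longrightarrow> b \<in> S \<Longrightarrow> b - a \<le> r"
  shows "emeasure lborel S \<le> ennreal r"
proof -
  obtain a0 where a0: "a0 \<in> S" using assms(1) by auto
  have ba: "bdd_above S" unfolding bdd_above_def
  proof (intro exI ballI)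
    fix b assume "b \<in> S" then show "b \<le> a0 + r" using assms(2)[OF a0, of b] by simp
  qed
  have bb: "bdd_below S" unfolding bdd_below_def
  proof (intro exI ballI)
    fix b assume "b \<in> S" then show "a0 - r \<le> b" using assms(2)[OF _ a0, of b] by simp
  qed
  have sub: "S \<subseteq> {Inf S .. Sup S}" using ba bb by (auto intro: cInf_lower cSup_upper)
  have "Sup S \<le> Inf S + r"
  proof -
    have "\<And>a. a \<in> S \<Longrightarrow> Sup S - r \<le> a"
    proof -
      fix a assume a: "a \<in> S"
      have "Sup S \<le> a + r" using assms(1) by (intro cSup_least) (use assms(2)[OF a] in force)+
      then show "Sup S - r \<le> a" by simp
    qed
    then have "Sup S - r \<le> Inf S" using assms(1) by (intro cInf_greatest) auto
    then show ?thesis by simp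
  qed
  moreover have "Inf S \<le> Sup S" using sub a0 by auto
  ultimately have "emeasure lborel S \<le> emeasure lborel {Inf S .. Sup S}"
    by (intro emeasure_mono[OF sub]) auto
  also have "\<dots> = ennreal (Sup S - Inf S)" using \<open>Inf S \<le> Sup S\<close> by simp
  also have "\<dots> \<le> ennreal r" using \<open>Sup S \<le> Inf S + r\<close> by (intro ennreal_leI) simp
  finally show ?thesis .
qed

lemma interval_comb_subset:
  fixes A B C :: "real set"
  assumes A: "is_interval A" and B: "is_interval B" and s: "0 \<le> s" "s \<le> 1"
    and C: "\<And>a b. a \<in> A \<Longrightarrow> b \<in> B \<Longrightarrow> s*a + (1-s)*b \<in> C"
    and a: "a1 \<in> A" "a2 \<in> A" "a1 \<le> a2" and b: "b1 \<in> B" "b2 \<in> B" "b1 \<le> b2"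
  shows "{s*a1 + (1-s)*b1 .. s*a2 + (1-s)*b2} \<subseteq> C"
proof
  fix x assume x: "x \<in> {s*a1 + (1-s)*b1 .. s*a2 + (1-s)*b2}"
  define lo where "lo = s*a1 + (1-s)*b1"
  define hi where "hi = s*a2 + (1-s)*b2"
  show "x \<in> C"
  proof (cases "lo = hi")
    case True
    then have "x = s*a1 + (1-s)*b1" using x lo_def hi_def by auto
    then show ?thesis using C a b by auto
  next
    case False
    have "lo \<le> hi" using x lo_def hi_def by auto
    with False have lh: "lo < hi" by auto
    define th where "th = (x - lo) / (hi - lo)"
    have th: "0 \<le> th" "th \<le> 1" using x lh unfolding th_def lo_def[symmetric] hi_def[symmetric]
      by (auto simp: field_simps)
    define a where "a = a1 + th * (a2 - a1)"
    define b where "b = b1 + th * (b2 - b1)"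
    have "th * (a2 - a1) \<le> a2 - a1" "0 \<le> th * (a2 - a1)" using th a(3)
      by (simp_all add: mult_left_le_one_le)
    then have "a1 \<le> a" "a \<le> a2" unfolding a_def by linarith+
    then have aA: "a \<in> A" using A a unfolding is_interval_1 by blast
    have "th * (b2 - b1) \<le> b2 - b1" "0 \<le> th * (b2 - b1)" using th b(3)
      by (simp_all add: mult_left_le_one_le)
    then have "b1 \<le> b" "b \<le> b2" unfolding b_def by linarith+
    then have bB: "b \<in> B" using B b unfolding is_interval_1 by blast
    have "s*a + (1-s)*b = lo + th * (hi - lo)"
      unfolding a_def b_def lo_def hi_def by (simp add: algebra_simps)
    also have "\<dots> = x" using lh unfolding th_def by (simp add: field_simps)
    finally show ?thesis using C[OF aA bB] by simp
  qed
qed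

lemma long_pair:
  fixes A :: "real set"
  assumes "A \<noteq> {}" "emeasure lborel A < \<infinity>" "e > 0"
  shows "\<exists>a1 a2. a1 \<in> A \<and> a2 \<in> A \<and> a1 \<le> a2 \<and> enn2real (emeasure lborel A) - e \<le> a2 - a1"
proof (rule ccontr)
  assume "\<not> ?thesis"
  then have H: "\<And>a1 a2. a1 \<in> A \<Longrightarrow> a2 \<in> A \<Longrightarrow> a1 \<le> a2 \<Longrightarrow> a2 - a1 < enn2real (emeasure lborel A) - e"
    by force
  have r: "\<And>a b. a \<in> A \<Longrightarrow> b \<in> A \<Longrightarrow> b - a \<le> enn2real (emeasure lborel A) - e"
  proof -
    fix a b assume ab: "a \<in> A" "b \<in> A"
    show "b - a \<le> enn2real (emeasure lborel A) - e"
    proof (cases "a \<le> b")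
      case True then show ?thesis using H ab by force
    next
      case False
      have "0 < enn2real (emeasure lborel A) - e" using H[OF ab(1) ab(1)] by simp
      then show ?thesis using False by simp
    qed
  qed
  have "emeasure lborel A \<le> ennreal (enn2real (emeasure lborel A) - e)"
    using emeasure_diam_le[OF assms(1) r] by simp
  moreover have "ennreal (enn2real (emeasure lborel A) - e) < emeasure lborel A"
  proof -
    obtain a0 where "a0 \<in> A" using assms(1) by auto
    then have "0 < enn2real (emeasure lborel A) - e" using H by force
    then show ?thesis using assms
      by (cases "emeasure lborel A") (auto simp: ennreal_less_iff)
  qed
  ultimately show False by simp
qed

lemma BM1:
  fixes A B C :: "real set"
  assumes A: "is_interval A" "A \<noteq> {}" "emeasure lborel A < \<infinity>"
    and B: "is_interval B" "B \<noteq> {}" "emeasure lborel B < \<infinity>"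
    and s: "0 < s" "s < 1"
    and C: "C \<in> sets borel" "\<And>a b. a \<in> A \<Longrightarrow> b \<in> B \<Longrightarrow> s*a + (1-s)*b \<in> C"
  shows "ennreal s * emeasure lborel A + ennreal (1-s) * emeasure lborel B \<le> emeasure lborel C"
proof -
  define mA where "mA = enn2real (emeasure lborel A)"
  define mB where "mB = enn2real (emeasure lborel B)"
  have eA: "emeasure lborel A = ennreal mA" using A(3) unfolding mA_def
    by (simp add: ennreal_enn2real_if)
  have eB: "emeasure lborel B = ennreal mB" using B(3) unfolding mB_def
    by (simp add: ennreal_enn2real_if)
  have mA0: "0 \<le> mA" "0 \<le> mB" unfolding mA_def mB_def by simp_all
  have lhs: "ennreal s * emeasure lborel A + ennreal (1-s) * emeasure lborel B = ennreal (s*mA + (1-s)*mB)"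
    unfolding eA eB using s mA0
    by (subst ennreal_plus) (auto simp: ennreal_mult)
  show ?thesis
  proof (cases "emeasure lborel C = \<infinity>")
    case True then show ?thesis by simp
  next
    case False
    define mC where "mC = enn2real (emeasure lborel C)"
    have eC: "emeasure lborel C = ennreal mC" using False unfolding mC_def
      by (simp add: ennreal_enn2real_if less_top)
    have "s*mA + (1-s)*mB \<le> mC"
    proof (rule field_le_epsilon)
      fix e :: real assume e: "0 < e"
      obtain a1 a2 where a: "a1 \<in> A" "a2 \<in> A" "a1 \<le> a2" "mA - e \<le> a2 - a1"
        using long_pair[OF A(2,3) e] unfolding mA_def by blast
      obtain b1 b2 where b: "b1 \<in> B" "b2 \<in> B" "b1 \<le> b2" "mB - e \<le> b2 - b1"
        using long_pair[OF B(2,3) e] unfolding mB_def by blast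
      have sub: "{s*a1 + (1-s)*b1 .. s*a2 + (1-s)*b2} \<subseteq> C"
        using interval_comb_subset[OF A(1) B(1) _ _ C(2) a(1-3) b(1-3)] s by simp
      have le: "s*a1 + (1-s)*b1 \<le> s*a2 + (1-s)*b2"
        using a b s by (intro add_mono mult_left_mono) auto
      have "ennreal ((s*a2 + (1-s)*b2) - (s*a1 + (1-s)*b1)) \<le> emeasure lborel C"
        using emeasure_mono[of _ _ lborel, OF sub] C(1) le by simp
      then have "(s*a2 + (1-s)*b2) - (s*a1 + (1-s)*b1) \<le> mC"
        unfolding eC using mA0 le by (auto simp add: ennreal_le_iff2 mC_def) 
      moreover have "s*(mA - e) + (1-s)*(mB - e) \<le> s*(a2-a1) + (1-s)*(b2-b1)"
        using a b s by (intro add_mono mult_left_mono) auto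
      ultimately show "s*mA + (1-s)*mB \<le> mC + e" by (simp add: algebra_simps)
    qed
    then show ?thesis unfolding lhs eC by (intro ennreal_leI)
  qed
qed

lemma layer_cake:
  fixes f :: "real \<Rightarrow> real"
  assumes fm[measurable]: "f \<in> borel_measurable borel" and f0: "\<And>y. 0 \<le> f y"
  shows "(\<integral>\<^sup>+y. ennreal (f y) \<partial>lborel) = (\<integral>\<^sup>+t. indicator {0<..} t * emeasure lborel {y. t < f y} \<partial>lborel)"
proof -
  have "(\<integral>\<^sup>+y. ennreal (f y) \<partial>lborel) = (\<integral>\<^sup>+y. (\<integral>\<^sup>+t. indicator {0<..<f y} t \<partial>lborel) \<partial>lborel)"
    using f0 by (intro nn_integral_cong) simp
  also have "\<dots> = (\<integral>\<^sup>+t. (\<integral>\<^sup>+y. indicator {0<..<f y} t \<partial>lborel) \<partial>lborel)"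
  proof (rule lborel_pair.Fubini')
    have "{x \<in> space (lborel \<Otimes>\<^sub>M lborel). 0 < fst x \<and> fst x < f (snd x)} \<in> sets (lborel \<Otimes>\<^sub>M lborel)"
      by measurable
    then show "(\<lambda>(t, y). indicator {0<..<f y} t :: ennreal) \<in> borel_measurable (lborel \<Otimes>\<^sub>M lborel)"
      by (subst measurable_cong[where g="indicator {x \<in> space (lborel \<Otimes>\<^sub>M lborel). 0 < fst x \<and> fst x < f (snd x)}"])
        (auto simp: indicator_def split: prod.splits)
  qed
  also have "\<dots> = (\<integral>\<^sup>+t. indicator {0<..} t * emeasure lborel {y. t < f y} \<partial>lborel)"
  proof (rule nn_integral_cong)
    fix t :: real
    have ms: "{y. t < f y} \<in> sets lborel" by measurable
    show "(\<integral>\<^sup>+y. indicator {0<..<f y} t \<partial>lborel) = indicator {0<..} t * emeasure lborel {y. t < f y}"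
    proof (cases "0 < t")
      case True
      then have "(\<integral>\<^sup>+y. indicator {0<..<f y} t \<partial>lborel) = (\<integral>\<^sup>+y. indicator {y. t < f y} y \<partial>lborel)"
        by (intro nn_integral_cong) (auto simp: indicator_def)
      also have "\<dots> = emeasure lborel {y. t < f y}" using ms by simp
      finally show ?thesis using True by simp
    next
      case False then show ?thesis by (simp add: indicator_def)
    qed
  qed
  finally show ?thesis .
qed

lemma lev_meas:
  fixes h :: "real \<Rightarrow> real"
  assumes [measurable]: "h \<in> borel_measurable borel"
  shows "(\<lambda>t. emeasure lborel {y. t < h y}) \<in> borel_measurable borel"
proof -
  define Q where "Q = {p \<in> space (lborel \<Otimes>\<^sub>M lborel). fst p < h (snd p)}"
  have "Q \<in> sets (lborel \<Otimes>\<^sub>M lborel)" unfolding Q_def by measurable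
  from lborel.measurable_emeasure_Pair[OF this]
  have "(\<lambda>x. emeasure lborel (Pair x -` Q)) \<in> borel_measurable lborel" .
  moreover have "\<And>x. Pair x -` Q = {y. x < h y}" unfolding Q_def by (auto simp: space_pair_measure)
  ultimately show ?thesis by simp
qed

lemma interval_fun_measurable:
  fixes f :: "real \<Rightarrow> real"
  assumes f0: "\<And>y. 0 \<le> f y" and fi: "\<And>l. 0 < l \<Longrightarrow> is_interval {y. l < f y}"
  shows "f \<in> borel_measurable borel"
proof -
  have "{w \<in> space borel. a < f w} \<in> sets borel" for a
  proof (cases "0 < a")
    case True then show ?thesis using real_interval_borel_measurable[OF fi[OF True]] by simp
  next
    case False
    show ?thesis
    proof (cases "a < 0")
      case True
      then have "{w \<in> space borel. a < f w} = UNIV" using f0 by (auto intro: less_le_trans)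
      then show ?thesis by simp
    next
      case False
      with \<open>\<not> 0 < a\<close> have a: "a = 0" by simp
      have "{w \<in> space borel. a < f w} = (\<Union>n. {y. 1 / real (Suc n) < f y})"
      proof (auto simp: a)
        fix x assume "0 < f x"
        then obtain n where "1 / real (Suc n) < f x" using reals_Archimedean[of "f x"]
          by (metis inverse_eq_divide)
        then show "\<exists>n. 1 / (1 + real n) < f x" by auto
      next
        fix x n assume "1 / (1 + real n) < f x"
        moreover have "0 < 1 / (1 + real n)" by simp
        ultimately show "0 < f x" by linarith
      qed
      also have "\<dots> \<in> sets borel"
        by (intro sets.countable_UN subsetI) (auto intro!: real_interval_borel_measurable fi)
      finally show ?thesis .
    qed
  qed
  then show ?thesis by (simp add: borel_measurable_iff_greater)
qed

lemma lev_scale: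
  fixes f :: "real \<Rightarrow> real"
  assumes fm[measurable]: "f \<in> borel_measurable borel" and f0: "\<And>y. 0 \<le> f y"
    and M: "0 < M" "\<And>y. f y \<le> M"
  shows "ennreal M * (\<integral>\<^sup>+l. indicator {0<..<1} l * emeasure lborel {y. M*l < f y} \<partial>lborel)
         = (\<integral>\<^sup>+y. ennreal (f y) \<partial>lborel)"
proof -
  have em[measurable]: "(\<lambda>t. emeasure lborel {y. t < f y}) \<in> borel_measurable borel"
    by (rule lev_meas) simp
  have "(\<integral>\<^sup>+y. ennreal (f y) \<partial>lborel) = (\<integral>\<^sup>+t. indicator {0<..} t * emeasure lborel {y. t < f y} \<partial>lborel)"
    by (rule layer_cake[OF fm f0])
  also have "\<dots> = (\<integral>\<^sup>+t. indicator {0<..<M} t * emeasure lborel {y. t < f y} \<partial>lborel)"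
  proof (rule nn_integral_cong)
    fix t :: real
    show "indicator {0<..} t * emeasure lborel {y. t < f y} = indicator {0<..<M} t * emeasure lborel {y. t < f y}"
    proof (cases "t < M")
      case False
      then have "\<And>y. \<not> t < f y" using M(2) by (meson not_less order_trans)
      then have "{y. t < f y} = {}" by auto
      then show ?thesis by simp
    qed (auto simp: indicator_def)
  qed
  also have "\<dots> = ennreal \<bar>M\<bar> * (\<integral>\<^sup>+l. indicator {0<..<M} (0 + M*l) * emeasure lborel {y. 0 + M*l < f y} \<partial>lborel)"
    by (rule nn_integral_real_affine) (use M in auto)
  also have "\<dots> = ennreal M * (\<integral>\<^sup>+l. indicator {0<..<1} l * emeasure lborel {y. M*l < f y} \<partial>lborel)"
    using M(1) by (intro arg_cong2[where f="(*)"] nn_integral_cong)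
      (auto simp: indicator_def zero_less_mult_iff)
  finally show ?thesis ..
qed

lemma ennreal_solve:
  assumes "ennreal M * X = ennreal I" "0 < M" "0 \<le> I"
  shows "X = ennreal (I / M)"
proof -
  have "X = (ennreal (1/M) * ennreal M) * X"
    using assms(2) by (simp add: ennreal_mult[symmetric])
  also have "\<dots> = ennreal (1/M) * ennreal I" using assms(1) by (simp add: mult.assoc)
  also have "\<dots> = ennreal (I/M)" using assms by (simp add: ennreal_mult[symmetric])
  finally show ?thesis .
qed

lemma markov_finite:
  fixes f :: "real \<Rightarrow> real"
  assumes [measurable]: "f \<in> borel_measurable borel" and f0: "\<And>y. 0 \<le> f y"
    and c: "0 < c" and I: "(\<integral>\<^sup>+y. ennreal (f y) \<partial>lborel) < \<infinity>"
  shows "emeasure lborel {y. c < f y} < \<infinity>"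
proof -
  have ms: "{y. c < f y} \<in> sets lborel" by measurable
  have "ennreal c * emeasure lborel {y. c < f y} = (\<integral>\<^sup>+y. ennreal c * indicator {y. c < f y} y \<partial>lborel)"
    using ms by (simp add: nn_integral_cmult_indicator)
  also have "\<dots> \<le> (\<integral>\<^sup>+y. ennreal (f y) \<partial>lborel)"
    by (intro nn_integral_mono) (auto simp: indicator_def intro!: ennreal_leI)
  finally have "ennreal c * emeasure lborel {y. c < f y} < \<infinity>" using I by (simp add: le_less_trans)
  then show ?thesis using c by (auto simp: ennreal_mult_less_top)
qed

lemma PL1:
  fixes f g h :: "real \<Rightarrow> real"
  assumes s: "0 < s" "s < 1"
    and f0: "\<And>y. 0 \<le> f y" and g0: "\<And>y. 0 \<le> g y" and h0: "\<And>y. 0 \<le> h y"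
    and fi: "\<And>l. 0 < l \<Longrightarrow> is_interval {y. l < f y}"
    and gi: "\<And>l. 0 < l \<Longrightarrow> is_interval {y. l < g y}"
    and hm[measurable]: "h \<in> borel_measurable borel"
    and hyp: "\<And>a b. f a powr s * g b powr (1-s) \<le> h (s*a + (1-s)*b)"
    and bf: "bdd_above (range f)" and bg: "bdd_above (range g)"
    and If: "(\<integral>\<^sup>+y. ennreal (f y) \<partial>lborel) < \<infinity>"
    and Ig: "(\<integral>\<^sup>+y. ennreal (g y) \<partial>lborel) < \<infinity>"
  shows "ennreal (enn2real (\<integral>\<^sup>+y. ennreal (f y) \<partial>lborel) powr s * enn2real (\<integral>\<^sup>+y. ennreal (g y) \<partial>lborel) powr (1-s))
          \<le> (\<integral>\<^sup>+y. ennreal (h y) \<partial>lborel)"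
proof -
  have fm[measurable]: "f \<in> borel_measurable borel" by (rule interval_fun_measurable[OF f0 fi])
  have gm[measurable]: "g \<in> borel_measurable borel" by (rule interval_fun_measurable[OF g0 gi])
  define Mf where "Mf = Sup (range f)"
  define Mg where "Mg = Sup (range g)"
  define If' where "If' = enn2real (\<integral>\<^sup>+y. ennreal (f y) \<partial>lborel)"
  define Ig' where "Ig' = enn2real (\<integral>\<^sup>+y. ennreal (g y) \<partial>lborel)"
  have eIf: "(\<integral>\<^sup>+y. ennreal (f y) \<partial>lborel) = ennreal If'"
    using If unfolding If'_def by (simp add: ennreal_enn2real_if)
  have eIg: "(\<integral>\<^sup>+y. ennreal (g y) \<partial>lborel) = ennreal Ig'"
    using Ig unfolding Ig'_def by (simp add: ennreal_enn2real_if)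
  have If0: "0 \<le> If'" "0 \<le> Ig'" unfolding If'_def Ig'_def by simp_all
  have fle: "\<And>y. f y \<le> Mf" unfolding Mf_def using bf by (intro cSup_upper) auto
  have gle: "\<And>y. g y \<le> Mg" unfolding Mg_def using bg by (intro cSup_upper) auto
  have Mf0: "0 \<le> Mf" using fle[of 0] f0[of 0] by simp
  have Mg0: "0 \<le> Mg" using gle[of 0] g0[of 0] by simp
  show ?thesis
  proof (cases "Mf = 0 \<or> Mg = 0")
    case True
    then have "If' = 0 \<or> Ig' = 0"
    proof
      assume "Mf = 0"
      then have "\<And>y. f y = 0" using fle f0 by (metis order.antisym)
      then show ?thesis unfolding If'_def by simp
    next
      assume "Mg = 0"
      then have "\<And>y. g y = 0" using gle g0 by (metis order.antisym)
      then show ?thesis unfolding Ig'_def by simp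
    qed
    then show ?thesis unfolding If'_def[symmetric] Ig'_def[symmetric] by auto
  next
    case False
    then have Mfp: "0 < Mf" and Mgp: "0 < Mg" using Mf0 Mg0 by auto
    define P where "P = Mf powr s * Mg powr (1-s)"
    have Pp: "0 < P" unfolding P_def using Mfp Mgp by simp
    have emf[measurable]: "(\<lambda>t. emeasure lborel {y. t < f y}) \<in> borel_measurable borel" by (rule lev_meas) simp
    have emg[measurable]: "(\<lambda>t. emeasure lborel {y. t < g y}) \<in> borel_measurable borel" by (rule lev_meas) simp
    have emh[measurable]: "(\<lambda>t. emeasure lborel {y. t < h y}) \<in> borel_measurable borel" by (rule lev_meas) simp
    have hlev: "ennreal s * emeasure lborel {y. Mf*l < f y} + ennreal (1-s) * emeasure lborel {y. Mg*l < g y}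
        \<le> emeasure lborel {y. P*l < h y}" if l: "0 < l" "l < 1" for l
    proof (rule BM1)
      show "is_interval {y. Mf * l < f y}" using fi Mfp l by simp
      show "is_interval {y. Mg * l < g y}" using gi Mgp l by simp
      have "Mf * l < Mf" using Mfp l by simp
      then show "{y. Mf * l < f y} \<noteq> {}" unfolding Mf_def using bf by (subst (asm) less_cSup_iff) auto
      have "Mg * l < Mg" using Mgp l by simp
      then show "{y. Mg * l < g y} \<noteq> {}" unfolding Mg_def using bg by (subst (asm) less_cSup_iff) auto
      show "emeasure lborel {y. Mf * l < f y} < \<infinity>" using Mfp l by (intro markov_finite f0 If) auto
      show "emeasure lborel {y. Mg * l < g y} < \<infinity>" using Mgp l by (intro markov_finite g0 Ig) auto
      show "{y. P * l < h y} \<in> sets borel" by measurable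
      show "0 < s" "s < 1" by (rule s)+
      fix a b assume a: "a \<in> {y. Mf * l < f y}" and b: "b \<in> {y. Mg * l < g y}"
      have "P * l = (Mf*l) powr s * (Mg*l) powr (1-s)"
        unfolding P_def using Mfp Mgp l by (simp add: powr_mult powr_add[symmetric] algebra_simps)
      also have "\<dots> < f a powr s * g b powr (1-s)"
      proof -
        have p1: "0 < Mf*l" "0 < Mg*l" using Mfp Mgp l by simp_all
        have fa: "Mf*l < f a" and gb: "Mg*l < g b" using a b by auto
        have A: "(Mf*l) powr s < f a powr s" using p1 by (intro powr_less_mono2[OF s(1) _ fa]) auto
        have B: "(Mg*l) powr (1-s) < g b powr (1-s)" using p1 s by (intro powr_less_mono2[OF _ _ gb]) auto
        show ?thesis by (rule mult_strict_mono[OF A B]) (use p1 fa in auto)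
      qed
      also have "\<dots> \<le> h (s*a + (1-s)*b)" by (rule hyp)
      finally show "s * a + (1 - s) * b \<in> {y. P * l < h y}" by simp
    qed
    define Xf where "Xf = (\<integral>\<^sup>+l. indicator {0<..<1} l * emeasure lborel {y. Mf*l < f y} \<partial>lborel)"
    define Xg where "Xg = (\<integral>\<^sup>+l. indicator {0<..<1} l * emeasure lborel {y. Mg*l < g y} \<partial>lborel)"
    have Xf: "Xf = ennreal (If' / Mf)"
      using lev_scale[OF fm f0 Mfp fle] eIf Mfp If0 unfolding Xf_def[symmetric]
      by (intro ennreal_solve) auto
    have Xg: "Xg = ennreal (Ig' / Mg)"
      using lev_scale[OF gm g0 Mgp gle] eIg Mgp If0 unfolding Xg_def[symmetric]
      by (intro ennreal_solve) auto
    define Z where "Z = (\<integral>\<^sup>+l. indicator {0<..<1} l * emeasure lborel {y. P*l < h y} \<partial>lborel)"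
    have "(\<integral>\<^sup>+t. indicator {0<..<P} t * emeasure lborel {y. t < h y} \<partial>lborel)
        \<le> (\<integral>\<^sup>+t. indicator {0<..} t * emeasure lborel {y. t < h y} \<partial>lborel)"
      by (intro nn_integral_mono mult_right_mono) (auto simp: indicator_def)
    also have "\<dots> = (\<integral>\<^sup>+y. ennreal (h y) \<partial>lborel)"
      by (rule layer_cake[OF hm h0, symmetric])
    finally have c0: "(\<integral>\<^sup>+t. indicator {0<..<P} t * emeasure lborel {y. t < h y} \<partial>lborel)
        \<le> (\<integral>\<^sup>+y. ennreal (h y) \<partial>lborel)" .
    have "(\<integral>\<^sup>+t. indicator {0<..<P} t * emeasure lborel {y. t < h y} \<partial>lborel)
        = ennreal \<bar>P\<bar> * (\<integral>\<^sup>+l. indicator {0<..<P} (0 + P*l) * emeasure lborel {y. 0 + P*l < h y} \<partial>lborel)"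
      by (rule nn_integral_real_affine) (use Pp in auto)
    also have "\<dots> = ennreal P * Z"
      unfolding Z_def using Pp by (intro arg_cong2[where f="(*)"] nn_integral_cong)
        (auto simp: indicator_def zero_less_mult_iff)
    finally have c1: "ennreal P * Z \<le> (\<integral>\<^sup>+y. ennreal (h y) \<partial>lborel)" using c0 by simp
    have c2: "(\<integral>\<^sup>+l. ennreal s * (indicator {0<..<1} l * emeasure lborel {y. Mf*l < f y})
              + ennreal (1-s) * (indicator {0<..<1} l * emeasure lborel {y. Mg*l < g y}) \<partial>lborel) \<le> Z"
      unfolding Z_def
    proof (rule nn_integral_mono)
      fix l :: real
      show "ennreal s * (indicator {0<..<1} l * emeasure lborel {y. Mf*l < f y})
              + ennreal (1-s) * (indicator {0<..<1} l * emeasure lborel {y. Mg*l < g y})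
            \<le> indicator {0<..<1} l * emeasure lborel {y. P*l < h y}"
        using hlev[of l] by (cases "0 < l \<and> l < 1") (auto simp: indicator_def)
    qed
    have c3: "(\<integral>\<^sup>+l. ennreal s * (indicator {0<..<1} l * emeasure lborel {y. Mf*l < f y})
              + ennreal (1-s) * (indicator {0<..<1} l * emeasure lborel {y. Mg*l < g y}) \<partial>lborel)
        = ennreal s * Xf + ennreal (1-s) * Xg"
      unfolding Xf_def Xg_def
      apply (subst nn_integral_add)
        apply (simp; fail)
       apply (simp; fail)
      apply (subst nn_integral_cmult, simp)
      apply (subst nn_integral_cmult, simp)
      apply (rule refl)
      done
    have main: "ennreal P * (ennreal s * Xf + ennreal (1-s) * Xg) \<le> (\<integral>\<^sup>+y. ennreal (h y) \<partial>lborel)"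
      using c1 c2 c3 by (metis mult_left_mono order_trans zero_le)
    have "ennreal P * (ennreal s * Xf + ennreal (1-s) * Xg) = ennreal (P * (s * (If'/Mf) + (1-s) * (Ig'/Mg)))"
    proof -
      have n1: "0 \<le> s*(If'/Mf)" "0 \<le> (1-s)*(Ig'/Mg)" using s If0 Mfp Mgp by simp_all
      have e1: "ennreal s * ennreal (If'/Mf) = ennreal (s*(If'/Mf))"
        using s If0 Mfp by (subst ennreal_mult) simp_all
      have e2: "ennreal (1-s) * ennreal (Ig'/Mg) = ennreal ((1-s)*(Ig'/Mg))"
        using s If0 Mgp by (subst ennreal_mult) simp_all
      have e3: "ennreal (s*(If'/Mf)) + ennreal ((1-s)*(Ig'/Mg)) = ennreal (s*(If'/Mf) + (1-s)*(Ig'/Mg))"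
        using n1 by (subst ennreal_plus) simp_all
      have e4: "ennreal P * ennreal (s*(If'/Mf) + (1-s)*(Ig'/Mg)) = ennreal (P * (s*(If'/Mf) + (1-s)*(Ig'/Mg)))"
        using n1 Pp by (subst ennreal_mult) simp_all
      show ?thesis unfolding Xf Xg e1 e2 e3 e4 ..
    qed
    moreover have "If' powr s * Ig' powr (1-s) \<le> P * (s * (If'/Mf) + (1-s) * (Ig'/Mg))"
    proof (cases "If' = 0 \<or> Ig' = 0")
      case True then show ?thesis using Pp s If0 Mfp Mgp by auto
    next
      case False
      then have pos: "0 < If'/Mf" "0 < Ig'/Mg" using If0 Mfp Mgp by auto
      have "P * ((If'/Mf) powr s * (Ig'/Mg) powr (1-s)) \<le> P * (s * (If'/Mf) + (1-s) * (Ig'/Mg))"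
        using Youngs_inequality_0[of s "1-s" "If'/Mf" "Ig'/Mg"] pos s Pp by (intro mult_left_mono) auto
      moreover have "P * ((If'/Mf) powr s * (Ig'/Mg) powr (1-s)) = If' powr s * Ig' powr (1-s)"
        unfolding P_def using If0 Mfp Mgp by (simp add: powr_divide field_simps)
      ultimately show ?thesis by simp
    qed
    ultimately show ?thesis unfolding If'_def[symmetric] Ig'_def[symmetric]
      using main by (metis ennreal_leI order_trans)
  qed
qed


lemma gauss_finite:
  fixes a :: real assumes a: "0 < a"
  shows "(\<integral>\<^sup>+y. ennreal (exp (- a * y\<^sup>2)) \<partial>lborel) < \<infinity>"
proof -
  define \<sigma> where "\<sigma> = sqrt (1 / (2*a))"
  have s2: "\<sigma>\<^sup>2 = 1/(2*a)" unfolding \<sigma>_def using a by simp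
  have \<sigma>pos: "0 < \<sigma>" unfolding \<sigma>_def using a by simp
  have eq: "exp (- a * y\<^sup>2) = sqrt (2 * pi * \<sigma>\<^sup>2) * normal_density 0 \<sigma> y" for y
    unfolding normal_density_def s2 using a by (simp add: field_simps)
  have "integrable lborel (\<lambda>y. sqrt (2 * pi * \<sigma>\<^sup>2) * normal_density 0 \<sigma> y)" using \<sigma>pos by (auto intro!: integrable_mult_right integrable_normal_density)
  then have "integrable lborel (\<lambda>y. exp (- a * y\<^sup>2))" unfolding eq[symmetric] .
  then show ?thesis using integrableD(2) by (auto simp: less_top)
qed


definition LCj :: "(('i \<Rightarrow> real) \<Rightarrow> 'v::real_vector \<Rightarrow> real) \<Rightarrow> bool" where
  "LCj H \<longleftrightarrow> (\<forall>f0 f1 v0 v1 s. 0 < s \<and> s < 1 \<longrightarrow>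
     H f0 v0 powr s * H f1 v1 powr (1-s) \<le> H (\<lambda>k. s * f0 k + (1-s) * f1 k) (s *\<^sub>R v0 + (1-s) *\<^sub>R v1))"

definition LCv :: "('v::real_vector \<Rightarrow> real) \<Rightarrow> bool" where
  "LCv F \<longleftrightarrow> (\<forall>v0 v1 s. 0 < s \<and> s < 1 \<longrightarrow> F v0 powr s * F v1 powr (1-s) \<le> F (s *\<^sub>R v0 + (1-s) *\<^sub>R v1))"

lemma line_interior:
  fixes F :: "real \<Rightarrow> real"
  assumes LC: "\<And>a b t. 0 < t \<Longrightarrow> t < 1 \<Longrightarrow> F a powr t * F b powr (1-t) \<le> F (t*a + (1-t)*b)"
    and l: "0 < l" and ax: "a < x" "x < b" and la: "l < F a" and lb: "l < F b"
  shows "l < F x"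
proof -
  define t where "t = (b - x) / (b - a)"
  have t: "0 < t" "t < 1" unfolding t_def using ax by (auto simp: field_simps)
  have ne: "b - a \<noteq> 0" using ax by simp
  have t1: "1 - t = (x - a) / (b - a)" unfolding t_def using ne by (simp add: field_simps)
  have "t*a + (1-t)*b = ((b-x)*a + (x-a)*b) / (b - a)" unfolding t1 unfolding t_def
    by (simp add: add_divide_distrib)
  also have "(b-x)*a + (x-a)*b = x * (b - a)" by (simp add: algebra_simps)
  finally have xt: "t*a + (1-t)*b = x" using ne by simp
  have "l = l powr t * l powr (1-t)" using l by (simp add: powr_add[symmetric])
  also have "\<dots> < F a powr t * F b powr (1-t)"
  proof -
    have A: "l powr t < F a powr t" using l t by (intro powr_less_mono2[OF t(1) _ la]) auto
    have B: "l powr (1-t) < F b powr (1-t)" using l t by (intro powr_less_mono2[OF _ _ lb]) auto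
    show ?thesis by (rule mult_strict_mono[OF A B]) (use l la in auto)
  qed
  also have "\<dots> \<le> F x" using LC[OF t, of a b] xt by simp
  finally show ?thesis .
qed

lemma line_interval:
  fixes F :: "real \<Rightarrow> real"
  assumes LC: "\<And>a b t. 0 < t \<Longrightarrow> t < 1 \<Longrightarrow> F a powr t * F b powr (1-t) \<le> F (t*a + (1-t)*b)"
    and l: "0 < l"
  shows "is_interval {y. l < F y}"
  unfolding is_interval_1
proof (intro ballI allI impI)
  fix a b x assume a: "a \<in> {y. l < F y}" and b: "b \<in> {y. l < F y}" and x: "a \<le> x \<and> x \<le> b"
  have "x = a \<or> x = b \<or> (a < x \<and> x < b)" using x by auto
  then show "x \<in> {y. l < F y}" using a b line_interior[OF LC l, of a x b] by auto
qed

lemma LCj_line: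
  assumes "LCj H"
  shows "\<And>a b t. 0 < t \<Longrightarrow> t < 1 \<Longrightarrow>
    H (x(i:=a)) v powr t * H (x(i:=b)) v powr (1-t) \<le> H (x(i:=t*a + (1-t)*b)) v"
proof -
  fix a b t :: real assume t: "0 < t" "t < 1"
  have e1: "(\<lambda>k. t * (x(i:=a)) k + (1-t) * (x(i:=b)) k) = x(i:=t*a + (1-t)*b)"
    by (auto simp: fun_eq_iff algebra_simps)
  have e2: "t *\<^sub>R v + (1-t) *\<^sub>R v = v" by (simp add: scaleR_left_distrib[symmetric])
  show "H (x(i:=a)) v powr t * H (x(i:=b)) v powr (1-t) \<le> H (x(i:=t*a + (1-t)*b)) v"
    using assms t unfolding LCj_def by (metis e1 e2)
qed

lemma sum_upd_sq:
  assumes "i \<notin> I" "finite I"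
  shows "(\<Sum>k\<in>insert i I. ((x(i:=y)) k)\<^sup>2) = y\<^sup>2 + (\<Sum>k\<in>I. (x k)\<^sup>2)"
proof -
  have "(\<Sum>k\<in>I. ((x(i:=y)) k)\<^sup>2) = (\<Sum>k\<in>I. (x k)\<^sup>2)"
    using assms by (intro sum.cong) auto
  then show ?thesis using assms by simp
qed

lemma fiber_bound:
  fixes H :: "('i \<Rightarrow> real) \<Rightarrow> 'v \<Rightarrow> real"
  assumes H0: "\<And>f. 0 \<le> H f v" and B: "\<And>f. H f v \<le> B * exp (- a * (\<Sum>k\<in>insert i I. (f k)\<^sup>2))"
    and iI: "i \<notin> I" "finite I" and a: "0 < a"
  shows "0 \<le> B" 
    and "\<And>y. H (x(i:=y)) v \<le> B * exp (- a * (\<Sum>k\<in>I. (x k)\<^sup>2))"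
    and "(\<integral>\<^sup>+y. ennreal (H (x(i:=y)) v) \<partial>lborel)
          \<le> ennreal (B * exp (- a * (\<Sum>k\<in>I. (x k)\<^sup>2))) * (\<integral>\<^sup>+y. ennreal (exp (- a * y\<^sup>2)) \<partial>lborel)"
    and "(\<integral>\<^sup>+y. ennreal (H (x(i:=y)) v) \<partial>lborel) < \<infinity>"
proof -
  have "0 \<le> B * exp (- a * (\<Sum>k\<in>insert i I. (x k)\<^sup>2))" using H0 B order.trans by blast
  then show B0: "0 \<le> B" by (simp add: zero_le_mult_iff)
  define C where "C = B * exp (- a * (\<Sum>k\<in>I. (x k)\<^sup>2))"
  have C0: "0 \<le> C" unfolding C_def using B0 by simp
  have pt: "H (x(i:=y)) v \<le> C * exp (- a * y\<^sup>2)" for y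
  proof -
    have "H (x(i:=y)) v \<le> B * exp (- a * (y\<^sup>2 + (\<Sum>k\<in>I. (x k)\<^sup>2)))"
      using B[of "x(i:=y)"] unfolding sum_upd_sq[OF iI] .
    also have "\<dots> = C * exp (- a * y\<^sup>2)" unfolding C_def
      by (simp add: algebra_simps exp_add[symmetric])
    finally show ?thesis .
  qed
  show "\<And>y. H (x(i:=y)) v \<le> B * exp (- a * (\<Sum>k\<in>I. (x k)\<^sup>2))"
  proof -
    fix y
    have "C * exp (- a * y\<^sup>2) \<le> C * 1" using C0 a by (intro mult_left_mono) auto
    then show "H (x(i:=y)) v \<le> B * exp (- a * (\<Sum>k\<in>I. (x k)\<^sup>2))" using pt[of y] unfolding C_def by simp
  qed
  have "(\<integral>\<^sup>+y. ennreal (H (x(i:=y)) v) \<partial>lborel) \<le> (\<integral>\<^sup>+y. ennreal C * ennreal (exp (- a * y\<^sup>2)) \<partial>lborel)"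
    using pt C0 by (intro nn_integral_mono) (simp add: ennreal_mult[symmetric])
  also have "\<dots> = ennreal C * (\<integral>\<^sup>+y. ennreal (exp (- a * y\<^sup>2)) \<partial>lborel)"
    by (rule nn_integral_cmult) simp
  finally show le: "(\<integral>\<^sup>+y. ennreal (H (x(i:=y)) v) \<partial>lborel)
          \<le> ennreal (B * exp (- a * (\<Sum>k\<in>I. (x k)\<^sup>2))) * (\<integral>\<^sup>+y. ennreal (exp (- a * y\<^sup>2)) \<partial>lborel)"
    unfolding C_def .
  then show "(\<integral>\<^sup>+y. ennreal (H (x(i:=y)) v) \<partial>lborel) < \<infinity>"
    using gauss_finite[OF a] by (auto simp: ennreal_mult_less_top le_less_trans)
qed

lemma PSF: "product_sigma_finite (\<lambda>_::'i. lborel::real measure)"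
  by (simp add: product_sigma_finite_def lborel.sigma_finite_measure_axioms)

lemma PK:
  fixes I :: "'i set" and H :: "('i \<Rightarrow> real) \<Rightarrow> 'v::real_vector \<Rightarrow> real"
  assumes "finite I" and a: "0 < a"
    and "\<And>v. (\<lambda>f. H f v) \<in> borel_measurable (PiM I (\<lambda>_. lborel))"
    and "\<And>f v. 0 \<le> H f v" and "LCj H"
    and "\<And>v. \<exists>B. \<forall>f. H f v \<le> B * exp (- a * (\<Sum>k\<in>I. (f k)\<^sup>2))"
  shows "(\<forall>v. (\<integral>\<^sup>+f. ennreal (H f v) \<partial>PiM I (\<lambda>_. lborel)) < \<infinity>) \<and>
         LCv (\<lambda>v. enn2real (\<integral>\<^sup>+f. ennreal (H f v) \<partial>PiM I (\<lambda>_. lborel)))"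
  using assms(1,3-6)
proof (induction I arbitrary: H rule: finite_induct)
  case (empty H)
  have eq: "\<And>v. (\<integral>\<^sup>+f. ennreal (H f v) \<partial>PiM {} (\<lambda>_. lborel)) = ennreal (H (\<lambda>_. undefined) v)"
    by (simp add: PiM_empty nn_integral_count_space_finite)
  have u: "(\<lambda>k. s * (\<lambda>_. undefined) k + (1-s) * (\<lambda>_. undefined) k) = (\<lambda>_::'i. undefined::real)" for s :: real
    by (simp add: fun_eq_iff algebra_simps)
  show ?case
  proof
    show "\<forall>v. (\<integral>\<^sup>+f. ennreal (H f v) \<partial>PiM {} (\<lambda>_. lborel)) < \<infinity>" unfolding eq by simp
    show "LCv (\<lambda>v. enn2real (\<integral>\<^sup>+f. ennreal (H f v) \<partial>PiM {} (\<lambda>_. lborel)))"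
      unfolding LCv_def eq
    proof (intro allI impI)
      fix v0 v1 :: 'v and s :: real assume s: "0 < s \<and> s < 1"
      have "H (\<lambda>_. undefined) v0 powr s * H (\<lambda>_. undefined) v1 powr (1-s)
          \<le> H (\<lambda>k. s * (\<lambda>_. undefined) k + (1-s) * (\<lambda>_. undefined) k) (s *\<^sub>R v0 + (1-s) *\<^sub>R v1)"
        using empty.prems(3) s unfolding LCj_def by blast
      then show "enn2real (ennreal (H (\<lambda>_. undefined) v0)) powr s * enn2real (ennreal (H (\<lambda>_. undefined) v1)) powr (1 - s)
         \<le> enn2real (ennreal (H (\<lambda>_. undefined) (s *\<^sub>R v0 + (1 - s) *\<^sub>R v1)))"
        unfolding u using empty.prems(2) by simp
    qed
  qed
next
  case (insert i I H)
  note Hm = insert.prems(1) and H0 = insert.prems(2) and LC = insert.prems(3) and Hb = insert.prems(4)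
  interpret P: product_sigma_finite "\<lambda>_::'i. lborel::real measure" by (rule PSF)
  define K where "K = (\<lambda>x v. enn2real (\<integral>\<^sup>+y. ennreal (H (x(i:=y)) v) \<partial>lborel))"
  have fin: "(\<integral>\<^sup>+y. ennreal (H (x(i:=y)) v) \<partial>lborel) < \<infinity>" for x v
  proof -
    obtain B where B: "\<forall>f. H f v \<le> B * exp (- a * (\<Sum>k\<in>insert i I. (f k)\<^sup>2))" using Hb by blast
    show ?thesis by (rule fiber_bound(4)[of H v B a i I]) (use H0 B insert.hyps a in auto)
  qed
  have eK: "ennreal (K x v) = (\<integral>\<^sup>+y. ennreal (H (x(i:=y)) v) \<partial>lborel)" for x v
    unfolding K_def using fin[of x v] by (simp add: ennreal_enn2real less_top)
  have K0: "0 \<le> K x v" for x v unfolding K_def by simp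
  have Km: "(\<lambda>x. K x v) \<in> borel_measurable (PiM I (\<lambda>_. lborel))" for v
  proof -
    have "(\<lambda>f. H f v) \<circ> (\<lambda>(f, y). f(i := y)) \<in> borel_measurable (PiM I (\<lambda>_. lborel) \<Otimes>\<^sub>M lborel)"
      using measurable_comp[OF measurable_add_dim[of i I "\<lambda>_. lborel"] Hm[of v]] by simp
    then have "(\<lambda>p. ennreal (H ((fst p)(i := snd p)) v)) \<in> borel_measurable (PiM I (\<lambda>_. lborel) \<Otimes>\<^sub>M lborel)"
      by (simp add: comp_def case_prod_unfold)
    from lborel.borel_measurable_nn_integral_fst[OF this]
    have "(\<lambda>x. \<integral>\<^sup>+y. ennreal (H (x(i := y)) v) \<partial>lborel) \<in> borel_measurable (PiM I (\<lambda>_. lborel))" by simp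
    then show ?thesis unfolding K_def by simp
  qed
  have Kb: "\<exists>B. \<forall>x. K x v \<le> B * exp (- a * (\<Sum>k\<in>I. (x k)\<^sup>2))" for v
  proof -
    obtain B where B: "\<forall>f. H f v \<le> B * exp (- a * (\<Sum>k\<in>insert i I. (f k)\<^sup>2))" using Hb by blast
    define g where "g = enn2real (\<integral>\<^sup>+y. ennreal (exp (- a * y\<^sup>2)) \<partial>lborel)"
    have eg: "(\<integral>\<^sup>+y. ennreal (exp (- a * y\<^sup>2)) \<partial>lborel) = ennreal g"
      unfolding g_def using gauss_finite[OF a] by (simp add: ennreal_enn2real less_top)
    have B0: "0 \<le> B" by (rule fiber_bound(1)[of H v B a i I]) (use H0 B insert.hyps a in auto)
    have g0: "0 \<le> g" unfolding g_def by simp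
    show ?thesis
    proof (intro exI allI)
      fix x
      have "ennreal (K x v) \<le> ennreal (B * exp (- a * (\<Sum>k\<in>I. (x k)\<^sup>2))) * ennreal g"
        unfolding eK eg[symmetric] by (rule fiber_bound(3)[of H v B a i I]) (use H0 B insert.hyps a in auto)
      also have "\<dots> = ennreal (B * g * exp (- a * (\<Sum>k\<in>I. (x k)\<^sup>2)))"
        using B0 g0 by (simp add: ennreal_mult[symmetric] mult_ac)
      finally show "K x v \<le> B * g * exp (- a * (\<Sum>k\<in>I. (x k)\<^sup>2))"
        using B0 g0 by (simp add: ennreal_le_iff)
    qed
  qed
  have KLC: "LCj K"
    unfolding LCj_def
  proof (intro allI impI)
    fix x0 x1 :: "'i \<Rightarrow> real" and v0 v1 :: 'v and s :: real
    assume s: "0 < s \<and> s < 1"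
    define xs where "xs = (\<lambda>k. s * x0 k + (1-s) * x1 k)"
    define vs where "vs = s *\<^sub>R v0 + (1-s) *\<^sub>R v1"
    let ?f = "\<lambda>y. H (x0(i:=y)) v0"
    let ?g = "\<lambda>y. H (x1(i:=y)) v1"
    let ?h = "\<lambda>y. H (xs(i:=y)) vs"
    have bnd: "bdd_above (range (\<lambda>y. H (x(i:=y)) v))" for x v
    proof -
      obtain B where B: "\<forall>f. H f v \<le> B * exp (- a * (\<Sum>k\<in>insert i I. (f k)\<^sup>2))" using Hb by blast
      show ?thesis
        using fiber_bound(2)[of H v B a i I x] H0 B insert.hyps a by (auto intro!: bdd_aboveI)
    qed
    have itv: "is_interval {y. l < H (x(i:=y)) v}" if "0 < l" for x v l
      by (rule line_interval[of "\<lambda>y. H (x(i:=y)) v", OF _ that]) (rule LCj_line[OF LC])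
    have hyp: "?f a powr s * ?g b powr (1-s) \<le> ?h (s*a + (1-s)*b)" for a b
    proof -
      have e1: "(\<lambda>k. s * (x0(i:=a)) k + (1-s) * (x1(i:=b)) k) = xs(i:=s*a + (1-s)*b)"
        unfolding xs_def by (auto simp: fun_eq_iff)
      show ?thesis using LC s unfolding LCj_def vs_def by (metis e1)
    qed
    have "ennreal (enn2real (\<integral>\<^sup>+y. ennreal (?f y) \<partial>lborel) powr s * enn2real (\<integral>\<^sup>+y. ennreal (?g y) \<partial>lborel) powr (1-s))
          \<le> (\<integral>\<^sup>+y. ennreal (?h y) \<partial>lborel)"
    proof (rule PL1)
      show "0 < s" "s < 1" using s by auto
      show "\<And>y. 0 \<le> ?f y" "\<And>y. 0 \<le> ?g y" "\<And>y. 0 \<le> ?h y" by (rule H0)+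
      show "\<And>l. 0 < l \<Longrightarrow> is_interval {y. l < ?f y}" "\<And>l. 0 < l \<Longrightarrow> is_interval {y. l < ?g y}"
        by (rule itv; assumption)+
      show "?h \<in> borel_measurable borel"
        by (rule interval_fun_measurable) (rule H0, rule itv)
      show "\<And>a b. ?f a powr s * ?g b powr (1-s) \<le> ?h (s*a + (1-s)*b)" by (rule hyp)
      show "bdd_above (range ?f)" "bdd_above (range ?g)" by (rule bnd)+
      show "(\<integral>\<^sup>+y. ennreal (?f y) \<partial>lborel) < \<infinity>" "(\<integral>\<^sup>+y. ennreal (?g y) \<partial>lborel) < \<infinity>" by (rule fin)+
    qed
    then have "ennreal (K x0 v0 powr s * K x1 v1 powr (1-s)) \<le> ennreal (K xs vs)"
      unfolding eK unfolding K_def .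
    then show "K x0 v0 powr s * K x1 v1 powr (1 - s) \<le> K (\<lambda>k. s * x0 k + (1 - s) * x1 k) (s *\<^sub>R v0 + (1 - s) *\<^sub>R v1)"
      unfolding xs_def vs_def using K0 by (simp add: ennreal_le_iff)
  qed
  have IH: "(\<forall>v. (\<integral>\<^sup>+x. ennreal (K x v) \<partial>PiM I (\<lambda>_. lborel)) < \<infinity>) \<and>
         LCv (\<lambda>v. enn2real (\<integral>\<^sup>+x. ennreal (K x v) \<partial>PiM I (\<lambda>_. lborel)))"
    by (rule insert.IH) (use Km K0 KLC Kb in auto)
  have eq: "(\<integral>\<^sup>+f. ennreal (H f v) \<partial>PiM (insert i I) (\<lambda>_. lborel)) = (\<integral>\<^sup>+x. ennreal (K x v) \<partial>PiM I (\<lambda>_. lborel))" for v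
  proof -
    have "(\<lambda>f. ennreal (H f v)) \<in> borel_measurable (PiM (insert i I) (\<lambda>_. lborel))" using Hm[of v] by simp
    then have "(\<integral>\<^sup>+f. ennreal (H f v) \<partial>PiM (insert i I) (\<lambda>_. lborel))
       = (\<integral>\<^sup>+x. (\<integral>\<^sup>+y. ennreal (H (x(i:=y)) v) \<partial>lborel) \<partial>PiM I (\<lambda>_. lborel))"
      using P.product_nn_integral_insert[OF insert.hyps(1,2)] by simp
    also have "\<dots> = (\<integral>\<^sup>+x. ennreal (K x v) \<partial>PiM I (\<lambda>_. lborel))" unfolding eK ..
    finally show ?thesis .
  qed
  show ?case unfolding eq using IH by simp
qed


lemma phi_meas: "(\<lambda>f. \<Sum>b\<in>Basis. f b *\<^sub>R (b::'e::euclidean_space)) \<in> borel_measurable (PiM Basis (\<lambda>_. lborel))"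
  by (intro borel_measurable_sum borel_measurable_scaleR) (auto intro: measurable_component_singleton)

lemma phi_inner: "b \<in> Basis \<Longrightarrow> (\<Sum>c\<in>Basis. f c *\<^sub>R (c::'e::euclidean_space)) \<bullet> b = f b"
  by (simp add: inner_sum_left inner_Basis if_distrib cong: if_cong)

lemma phi_norm: "(norm (\<Sum>c\<in>Basis. f c *\<^sub>R (c::'e::euclidean_space)))\<^sup>2 = (\<Sum>b\<in>Basis. (f b)\<^sup>2)"
proof -
  let ?x = "\<Sum>c\<in>Basis. f c *\<^sub>R (c::'e)"
  have "(norm ?x)\<^sup>2 = ?x \<bullet> ?x" by (simp add: power2_norm_eq_inner)
  also have "\<dots> = (\<Sum>b\<in>Basis. (?x \<bullet> b) * (?x \<bullet> b))" by (rule euclidean_inner)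
  also have "\<dots> = (\<Sum>b\<in>Basis. (f b)\<^sup>2)" by (intro sum.cong) (auto simp: phi_inner power2_eq_square)
  finally show ?thesis .
qed

lemma phi_comb: "(\<Sum>b\<in>Basis. (s * f0 b + (1-s) * f1 b) *\<^sub>R (b::'e::euclidean_space))
   = s *\<^sub>R (\<Sum>b\<in>Basis. f0 b *\<^sub>R b) + (1-s) *\<^sub>R (\<Sum>b\<in>Basis. f1 b *\<^sub>R b)"
  by (simp add: scaleR_sum_right sum.distrib[symmetric] scaleR_add_left)

lemma PK_eucl:
  fixes H :: "'e::euclidean_space \<Rightarrow> 'v::real_vector \<Rightarrow> real"
  assumes a: "0 < a"
    and Hm: "\<And>v. (\<lambda>w. H w v) \<in> borel_measurable borel"
    and H0: "\<And>w v. 0 \<le> H w v"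
    and LC: "\<And>w0 w1 v0 v1 s. 0 < s \<Longrightarrow> s < 1 \<Longrightarrow>
        H w0 v0 powr s * H w1 v1 powr (1-s) \<le> H (s *\<^sub>R w0 + (1-s) *\<^sub>R w1) (s *\<^sub>R v0 + (1-s) *\<^sub>R v1)"
    and Hb: "\<And>v. \<exists>B. \<forall>w. H w v \<le> B * exp (- a * (norm w)\<^sup>2)"
  shows "(\<forall>v. (\<integral>\<^sup>+w. ennreal (H w v) \<partial>lborel) < \<infinity>) \<and>
         LCv (\<lambda>v. enn2real (\<integral>\<^sup>+w. ennreal (H w v) \<partial>lborel))"
proof -
  let ?phi = "\<lambda>f. \<Sum>b\<in>Basis. f b *\<^sub>R (b::'e)"
  define H' where "H' = (\<lambda>f v. H (?phi f) v)"
  have eq: "(\<integral>\<^sup>+w. ennreal (H w v) \<partial>lborel) = (\<integral>\<^sup>+f. ennreal (H' f v) \<partial>PiM Basis (\<lambda>_. lborel))" for v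
  proof -
    have "(\<integral>\<^sup>+w. ennreal (H w v) \<partial>lborel) = (\<integral>\<^sup>+w. ennreal (H w v) \<partial>distr (PiM Basis (\<lambda>_. lborel)) borel ?phi)"
      by (subst lborel_eq) (rule refl)
    also have "\<dots> = (\<integral>\<^sup>+f. ennreal (H' f v) \<partial>PiM Basis (\<lambda>_. lborel))"
      unfolding H'_def by (rule nn_integral_distr[OF phi_meas]) (use Hm[of v] in simp)
    finally show ?thesis .
  qed
  have "(\<forall>v. (\<integral>\<^sup>+f. ennreal (H' f v) \<partial>PiM Basis (\<lambda>_. lborel)) < \<infinity>) \<and>
         LCv (\<lambda>v. enn2real (\<integral>\<^sup>+f. ennreal (H' f v) \<partial>PiM Basis (\<lambda>_. lborel)))"
  proof (rule PK[OF _ a])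
    show "finite (Basis::'e set)" by simp
    show "(\<lambda>f. H' f v) \<in> borel_measurable (PiM Basis (\<lambda>_. lborel))" for v
      unfolding H'_def using measurable_comp[OF phi_meas Hm[of v]] by (simp add: comp_def)
    show "0 \<le> H' f v" for f v unfolding H'_def by (rule H0)
    show "LCj H'" unfolding LCj_def H'_def phi_comb using LC by blast
    show "\<exists>B. \<forall>f. H' f v \<le> B * exp (- a * (\<Sum>k\<in>Basis. (f k)\<^sup>2))" for v
    proof -
      obtain B where B: "\<forall>w. H w v \<le> B * exp (- a * (norm w)\<^sup>2)" using Hb[of v] by blast
      show ?thesis unfolding H'_def
        by (rule exI[of _ B], rule allI, subst phi_norm[symmetric], rule B[rule_format])
    qed
  qed
  then show ?thesis unfolding eq .
qed


lemma sq_comb: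
  fixes u v :: "'a::real_inner"
  shows "(norm (s *\<^sub>R u + (1-s) *\<^sub>R v))\<^sup>2 = s * (norm u)\<^sup>2 + (1-s) * (norm v)\<^sup>2 - s*(1-s) * (norm (u - v))\<^sup>2"
  unfolding power2_norm_eq_inner
  by (simp add: inner_add_left inner_add_right inner_diff_left inner_diff_right inner_commute algebra_simps power2_eq_square)

lemma sc_convex:
  fixes \<phi> :: "'a::real_inner \<Rightarrow> real"
  assumes "strongly_convex \<alpha> \<phi>"
  shows "convex_on UNIV (\<lambda>u. \<phi> u - \<alpha>/2 * (norm u)\<^sup>2)"
proof (rule convex_onI)
  fix t :: real and x y :: 'a assume t: "0 < t" "t < 1"
  have "\<phi> (t *\<^sub>R y + (1-t) *\<^sub>R x) \<le> t * \<phi> y + (1-t) * \<phi> x - \<alpha>/2 * t * (1-t) * (norm (y - x))\<^sup>2"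
    using assms t unfolding strongly_convex_def by auto
  moreover have "(norm (t *\<^sub>R y + (1-t) *\<^sub>R x))\<^sup>2 = t * (norm y)\<^sup>2 + (1-t) * (norm x)\<^sup>2 - t*(1-t) * (norm (y - x))\<^sup>2"
    by (rule sq_comb)
  note eqn = this
  have "\<alpha>/2 * (norm (t *\<^sub>R y + (1-t) *\<^sub>R x))\<^sup>2 = t * (\<alpha>/2 * (norm y)\<^sup>2) + (1-t) * (\<alpha>/2 * (norm x)\<^sup>2) - \<alpha> / 2 * t * (1 - t) * (norm (y - x))\<^sup>2"
    unfolding eqn by (simp add: field_simps)
  ultimately have "\<phi> (t *\<^sub>R y + (1-t) *\<^sub>R x) - \<alpha> / 2 * (norm (t *\<^sub>R y + (1-t) *\<^sub>R x))\<^sup>2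
       \<le> (1 - t) * \<phi> x - (1-t) * (\<alpha> / 2 * (norm x)\<^sup>2) + (t * \<phi> y - t * (\<alpha> / 2 * (norm y)\<^sup>2))"
    by linarith
  moreover have eqP: "(1 - t) *\<^sub>R x + t *\<^sub>R y = t *\<^sub>R y + (1-t) *\<^sub>R x" by (simp add: add.commute)
  ultimately show "\<phi> ((1 - t) *\<^sub>R x + t *\<^sub>R y) - \<alpha> / 2 * (norm ((1 - t) *\<^sub>R x + t *\<^sub>R y))\<^sup>2
       \<le> (1 - t) * (\<phi> x - \<alpha> / 2 * (norm x)\<^sup>2) + t * (\<phi> y - \<alpha> / 2 * (norm y)\<^sup>2)"
    unfolding eqP by (simp add: right_diff_distrib)
qed simp

lemma sc_cont:
  fixes \<phi> :: "'a::euclidean_space \<Rightarrow> real"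
  assumes "strongly_convex \<alpha> \<phi>"
  shows "continuous_on UNIV \<phi>"
proof -
  have "continuous_on UNIV (\<lambda>u. \<phi> u - \<alpha>/2 * (norm u)\<^sup>2)"
    by (rule convex_on_continuous[OF open_UNIV sc_convex[OF assms]])
  moreover have "continuous_on UNIV (\<lambda>u::'a. \<alpha>/2 * (norm u)\<^sup>2)"
    by (intro continuous_intros)
  ultimately have "continuous_on UNIV (\<lambda>u. (\<phi> u - \<alpha>/2 * (norm u)\<^sup>2) + \<alpha>/2 * (norm u)\<^sup>2)"
    by (rule continuous_on_add)
  then show ?thesis by simp
qed

lemma sc_lower:
  fixes \<phi> :: "'a::euclidean_space \<Rightarrow> real"
  assumes sc: "strongly_convex \<alpha> \<phi>" and a: "0 < \<alpha>"
  shows "\<exists>K. \<forall>u. \<alpha>/4 * (norm u)\<^sup>2 - K \<le> \<phi> u"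
proof -
  define \<psi> where "\<psi> = (\<lambda>u. \<phi> u - \<alpha>/2 * (norm u)\<^sup>2)"
  have cv: "convex_on UNIV \<psi>" unfolding \<psi>_def by (rule sc_convex[OF sc])
  have ct: "continuous_on UNIV \<psi>" unfolding \<psi>_def by (rule convex_on_continuous[OF open_UNIV sc_convex[OF sc]])
  have "compact (\<psi> ` cball 0 1)"
    by (rule compact_continuous_image[OF continuous_on_subset[OF ct]]) auto
  then obtain m0 where m0: "\<And>v. v \<in> cball 0 1 \<Longrightarrow> norm (\<psi> v) \<le> m0"
    using compact_imp_bounded bounded_iff by (metis imageI)
  define m where "m = max m0 0"
  have m: "\<And>v. norm v \<le> 1 \<Longrightarrow> \<bar>\<psi> v\<bar> \<le> m" "0 \<le> m" using m0 unfolding m_def by force+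
  have lin: "- m - 2*m * norm u \<le> \<psi> u" for u
  proof (cases "norm u \<le> 1")
    case True
    have "- m \<le> \<psi> u" using m(1)[OF True] by (simp add: abs_le_iff)
    moreover have "0 \<le> 2*m * norm u" using m(2) by simp
    ultimately show ?thesis by linarith
  next
    case False
    define t where "t = 1 / norm u"
    have t: "0 < t" "t \<le> 1" using False unfolding t_def by (auto simp: divide_le_eq_1)
    have nv: "norm (t *\<^sub>R u) \<le> 1" using False unfolding t_def by simp
    have "\<psi> ((1 - t) *\<^sub>R 0 + t *\<^sub>R u) \<le> (1 - t) * \<psi> 0 + t * \<psi> u"
      using convex_onD[OF cv, of t 0 u] t by simp
    then have "\<psi> (t *\<^sub>R u) \<le> (1 - t) * \<psi> 0 + t * \<psi> u" by simp
    moreover have "- m \<le> \<psi> (t *\<^sub>R u)" using m(1)[OF nv] by simp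
    moreover have "(1 - t) * \<psi> 0 \<le> (1-t) * m" using m(1)[of 0] t by (intro mult_left_mono) auto
    moreover have "(1-t) * m \<le> m" using t m(2) by (simp add: mult_left_le_one_le)
    ultimately have "- 2 * m \<le> t * \<psi> u" by linarith
    then have "(-2*m) * norm u \<le> (t * \<psi> u) * norm u" using False by (intro mult_right_mono) auto
    also have "(t * \<psi> u) * norm u = \<psi> u" unfolding t_def using False by (cases "u = 0") simp_all
    finally show ?thesis using m(2) by simp
  qed
  show ?thesis
  proof (intro exI allI)
    fix u :: 'a
    have q: "\<alpha>/4 * (norm u)\<^sup>2 - 2*m * norm u + 4*m\<^sup>2/\<alpha> \<ge> 0"
    proof -
      have "\<alpha>/4 * (norm u - 4*m/\<alpha>)\<^sup>2 \<ge> 0" using a by simp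
      moreover have "\<alpha>/4 * (norm u - 4*m/\<alpha>)\<^sup>2 = \<alpha>/4 * (norm u)\<^sup>2 - 2*m * norm u + 4*m\<^sup>2/\<alpha>"
        using a by (simp add: power2_eq_square field_simps)
      ultimately show ?thesis by simp
    qed
    have "\<phi> u = \<psi> u + \<alpha>/2 * (norm u)\<^sup>2" unfolding \<psi>_def by simp
    then show "\<alpha>/4 * (norm u)\<^sup>2 - (m + 4*m\<^sup>2/\<alpha>) \<le> \<phi> u" using lin[of u] q a
      by linarith
  qed
qed


lemma cs3:
  fixes A B C p q r :: real
  assumes "0 < A" "0 < B" "0 < C"
  shows "(p+q+r)\<^sup>2 \<le> (A+B+C) * (p\<^sup>2/A + q\<^sup>2/B + r\<^sup>2/C)"
proof -
  define P Q R where "P = p/A" "Q = q/B" "R = r/C"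
  have p: "p = A*P" "q = B*Q" "r = C*R" using assms unfolding P_Q_R_def by auto
  have "(A+B+C) * (p\<^sup>2/A + q\<^sup>2/B + r\<^sup>2/C) - (p+q+r)\<^sup>2 = A*B*(P-Q)\<^sup>2 + A*C*(P-R)\<^sup>2 + B*C*(Q-R)\<^sup>2"
    unfolding p using assms by (simp add: power2_eq_square field_simps)
  moreover have "0 \<le> A*B*(P-Q)\<^sup>2 + A*C*(P-R)\<^sup>2 + B*C*(Q-R)\<^sup>2" using assms by simp
  ultimately show ?thesis by linarith
qed

lemma norm_vec_sq: "(norm (z::'a::real_normed_vector^'m::finite))\<^sup>2 = (\<Sum>j\<in>UNIV. (norm (z$j))\<^sup>2)"
  unfolding norm_vec_def L2_set_def by (simp add: sum_nonneg)

lemma xbar_bound: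
  fixes x :: "'a::real_normed_vector^'n::finite" and w :: "'n \<Rightarrow> real"
  assumes w0: "\<And>i. 0 \<le> w i" and S: "0 < (\<Sum>i\<in>UNIV. w i)"
  shows "(norm ((1 / (\<Sum>i\<in>UNIV. w i)) *\<^sub>R (\<Sum>i\<in>UNIV. w i *\<^sub>R x$i)))\<^sup>2 \<le> real CARD('n) * (\<Sum>i\<in>UNIV. (norm (x$i))\<^sup>2)"
proof -
  let ?S = "\<Sum>i\<in>UNIV. w i"
  have wle: "w i \<le> ?S" for i using w0 by (intro member_le_sum) auto
  have "norm ((1 / ?S) *\<^sub>R (\<Sum>i\<in>UNIV. w i *\<^sub>R x$i)) = (1/?S) * norm (\<Sum>i\<in>UNIV. w i *\<^sub>R x$i)"
    using S by simp
  also have "\<dots> \<le> (1/?S) * (\<Sum>i\<in>UNIV. w i * norm (x$i))"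
    using S w0 by (intro mult_left_mono order.trans[OF norm_sum]) auto
  also have "\<dots> = (\<Sum>i\<in>UNIV. (w i / ?S) * norm (x$i))" by (simp add: sum_distrib_left)
  also have "\<dots> \<le> (\<Sum>i\<in>UNIV. 1 * norm (x$i))"
    using S w0 wle by (intro sum_mono mult_right_mono) auto
  finally have n1: "norm ((1 / ?S) *\<^sub>R (\<Sum>i\<in>UNIV. w i *\<^sub>R x$i)) \<le> (\<Sum>i\<in>UNIV. 1 * norm (x$i))" .
  have "(norm ((1 / ?S) *\<^sub>R (\<Sum>i\<in>UNIV. w i *\<^sub>R x$i)))\<^sup>2 \<le> (\<Sum>i\<in>UNIV. 1 * norm (x$i))\<^sup>2"
    using n1 by (intro power_mono) auto
  also have "\<dots> \<le> real CARD('n) * (\<Sum>i\<in>UNIV. (norm (x$i))\<^sup>2)"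
    using Cauchy_Schwarz_ineq_sum[of "\<lambda>_. (1::real)" "\<lambda>i. norm (x$i)" UNIV] by simp
  finally show ?thesis by simp
qed

lemma QUAD:
  fixes x :: "'a::real_inner^'n::finite" and y z :: "'a^'m::finite"
    and \<sigma> :: "'n \<Rightarrow> 'm \<Rightarrow> real" and af :: "'n \<Rightarrow> real" and ag :: "'m \<Rightarrow> real"
  assumes \<eta>: "0 < \<eta>" and t: "0 < t" "t < 1"
    and af: "\<And>i. 0 < af i" and ag: "\<And>j. 0 < ag j"
    and \<sigma>0: "\<And>i j. 0 \<le> \<sigma> i j" and S: "\<And>j. 0 < (\<Sum>i\<in>UNIV. \<sigma> i j)"
  shows "1 / (\<eta> * t * (1 - t) / Min (range (\<lambda>j. \<Sum>i\<in>UNIV. \<sigma> i j))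
                 + real (CARD('m) * CARD('n)) * (1 - t)\<^sup>2 / Min (range af)
                 + t\<^sup>2 / Min (range ag)) / 2 * (norm z)\<^sup>2
   \<le> (\<Sum>i\<in>UNIV. af i / 2 * (norm (x$i))\<^sup>2) + (\<Sum>j\<in>UNIV. ag j / 2 * (norm (y$j))\<^sup>2)
     + (\<Sum>j\<in>UNIV. (\<Sum>i\<in>UNIV. \<sigma> i j) / (2 * t * (1 - t) * \<eta>) *
          (norm (z $ j - t *\<^sub>R y $ j
                 - (1 - t) *\<^sub>R ((1 / (\<Sum>i\<in>UNIV. \<sigma> i j)) *\<^sub>R (\<Sum>i\<in>UNIV. \<sigma> i j *\<^sub>R x $ i))))\<^sup>2)"
proof -
  define Sj where "Sj = (\<lambda>j. \<Sum>i\<in>UNIV. \<sigma> i j)"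
  define Smin where "Smin = Min (range Sj)"
  define Fmin where "Fmin = Min (range af)"
  define Gmin where "Gmin = Min (range ag)"
  define N where "N = real (CARD('m) * CARD('n))"
  define A where "A = \<eta> * t * (1 - t) / Smin"
  define B where "B = N * (1 - t)\<^sup>2 / Fmin"
  define C where "C = t\<^sup>2 / Gmin"
  define xb where "xb = (\<lambda>j. (1 / Sj j) *\<^sub>R (\<Sum>i\<in>UNIV. \<sigma> i j *\<^sub>R x $ i))"
  define e where "e = (\<lambda>j. z $ j - t *\<^sub>R y $ j - (1 - t) *\<^sub>R xb j)"
  have Smin: "0 < Smin" "\<And>j. Smin \<le> Sj j"
    unfolding Smin_def using Min_in[of "range Sj"] S unfolding Sj_def by (auto intro: Min_le)
  have Fmin: "0 < Fmin" "\<And>i. Fmin \<le> af i"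
    unfolding Fmin_def using Min_in[of "range af"] af by (auto intro: Min_le)
  have Gmin: "0 < Gmin" "\<And>j. Gmin \<le> ag j"
    unfolding Gmin_def using Min_in[of "range ag"] ag by (auto intro: Min_le)
  have N: "0 < N" unfolding N_def by simp
  have ABC: "0 < A" "0 < B" "0 < C" unfolding A_def B_def C_def using \<eta> t Smin Fmin Gmin N by auto
  define c where "c = 1 / (A + B + C)"
  have c: "0 < c" unfolding c_def using ABC by simp
  have xbj: "(norm (xb j))\<^sup>2 \<le> real CARD('n) * (\<Sum>i\<in>UNIV. (norm (x$i))\<^sup>2)" for j
    unfolding xb_def Sj_def by (rule xbar_bound) (use \<sigma>0 S in auto)
  have perj: "c * (norm (z$j))\<^sup>2 \<le> Sj j / (\<eta> * t * (1-t)) * (norm (e j))\<^sup>2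
       + Fmin / N * (norm (xb j))\<^sup>2 + ag j * (norm (y$j))\<^sup>2" for j
  proof -
    have zj: "z$j = e j + (1-t) *\<^sub>R xb j + t *\<^sub>R y$j" unfolding e_def by simp
    have "norm (z$j) \<le> norm (e j) + (1-t) * norm (xb j) + t * norm (y$j)"
      unfolding zj using t by (metis (no_types) abs_of_nonneg less_imp_le diff_ge_0_iff_ge
          norm_scaleR norm_triangle_le norm_triangle_ineq add_mono order_refl)
    then have "(norm (z$j))\<^sup>2 \<le> (norm (e j) + (1-t) * norm (xb j) + t * norm (y$j))\<^sup>2"
      by (intro power_mono) auto
    also have "\<dots> \<le> (A+B+C) * ((norm (e j))\<^sup>2/A + ((1-t) * norm (xb j))\<^sup>2/B + (t * norm (y$j))\<^sup>2/C)"
      by (rule cs3[OF ABC])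
    finally have "c * (norm (z$j))\<^sup>2 \<le> (norm (e j))\<^sup>2/A + ((1-t) * norm (xb j))\<^sup>2/B + (t * norm (y$j))\<^sup>2/C"
      unfolding c_def using ABC by (simp add: field_simps)
    also have "(norm (e j))\<^sup>2/A = Smin / (\<eta> * t * (1-t)) * (norm (e j))\<^sup>2"
      unfolding A_def by simp
    also have "((1-t) * norm (xb j))\<^sup>2/B = Fmin / N * (norm (xb j))\<^sup>2"
    proof -
      have ne: "(1-t)\<^sup>2 \<noteq> 0" using t by simp
      show ?thesis unfolding B_def power_mult_distrib using ne Fmin N by (simp add: field_simps)
    qed
    also have "(t * norm (y$j))\<^sup>2/C = Gmin * (norm (y$j))\<^sup>2"
      unfolding C_def using t by (simp add: power_mult_distrib field_simps)
    finally have 1: "c * (norm (z$j))\<^sup>2 \<le> Smin / (\<eta> * t * (1-t)) * (norm (e j))\<^sup>2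
       + Fmin / N * (norm (xb j))\<^sup>2 + Gmin * (norm (y$j))\<^sup>2" .
    have 2: "Smin / (\<eta> * t * (1-t)) * (norm (e j))\<^sup>2 \<le> Sj j / (\<eta> * t * (1-t)) * (norm (e j))\<^sup>2"
      using Smin \<eta> t by (intro mult_right_mono divide_right_mono) auto
    have 3: "Gmin * (norm (y$j))\<^sup>2 \<le> ag j * (norm (y$j))\<^sup>2"
      using Gmin by (intro mult_right_mono) auto
    show ?thesis using 1 2 3 by linarith
  qed
  have "c * (norm z)\<^sup>2 = (\<Sum>j\<in>UNIV. c * (norm (z$j))\<^sup>2)" by (simp add: norm_vec_sq sum_distrib_left)
  also have "\<dots> \<le> (\<Sum>j\<in>UNIV. Sj j / (\<eta> * t * (1-t)) * (norm (e j))\<^sup>2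
       + Fmin / N * (norm (xb j))\<^sup>2 + ag j * (norm (y$j))\<^sup>2)"
    by (rule sum_mono[OF perj])
  also have "\<dots> = (\<Sum>j\<in>UNIV. Sj j / (\<eta> * t * (1-t)) * (norm (e j))\<^sup>2)
      + (\<Sum>j\<in>UNIV. Fmin / N * (norm (xb j))\<^sup>2) + (\<Sum>j\<in>UNIV. ag j * (norm (y$j))\<^sup>2)"
    by (simp add: sum.distrib)
  also have "(\<Sum>j\<in>UNIV. Fmin / N * (norm (xb j))\<^sup>2) \<le> (\<Sum>j\<in>(UNIV::'m set). Fmin / N * (real CARD('n) * (\<Sum>i\<in>UNIV. (norm (x$i))\<^sup>2)))"
  proof (rule sum_mono)
    fix j :: 'm
    show "Fmin / N * (norm (xb j))\<^sup>2 \<le> Fmin / N * (real CARD('n) * (\<Sum>i\<in>UNIV. (norm (x$i))\<^sup>2))"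
      by (rule mult_left_mono[OF xbj]) (use Fmin N in simp)
  qed
  also have "\<dots> = Fmin * (\<Sum>i\<in>UNIV. (norm (x$i))\<^sup>2)"
    unfolding N_def by simp
  also have "\<dots> \<le> (\<Sum>i\<in>UNIV. af i * (norm (x$i))\<^sup>2)"
    unfolding sum_distrib_left using Fmin by (intro sum_mono mult_right_mono) auto
  finally have main: "c * (norm z)\<^sup>2 \<le> (\<Sum>j\<in>UNIV. Sj j / (\<eta> * t * (1-t)) * (norm (e j))\<^sup>2)
      + (\<Sum>i\<in>UNIV. af i * (norm (x$i))\<^sup>2) + (\<Sum>j\<in>UNIV. ag j * (norm (y$j))\<^sup>2)" by simp
  have eqc: "1 / (\<eta> * t * (1 - t) / Min (range (\<lambda>j. \<Sum>i\<in>UNIV. \<sigma> i j))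
                 + real (CARD('m) * CARD('n)) * (1 - t)\<^sup>2 / Min (range af)
                 + t\<^sup>2 / Min (range ag)) = c"
    unfolding c_def A_def B_def C_def Smin_def Fmin_def Gmin_def N_def Sj_def ..
  have h1: "(\<Sum>i\<in>UNIV. af i / 2 * (norm (x$i))\<^sup>2) = 1/2 * (\<Sum>i\<in>UNIV. af i * (norm (x$i))\<^sup>2)"
    unfolding sum_distrib_left by (intro sum.cong refl) simp
  have h2: "(\<Sum>j\<in>UNIV. ag j / 2 * (norm (y$j))\<^sup>2) = 1/2 * (\<Sum>j\<in>UNIV. ag j * (norm (y$j))\<^sup>2)"
    unfolding sum_distrib_left by (intro sum.cong refl) simp
  have h3: "(\<Sum>j\<in>UNIV. (\<Sum>i\<in>UNIV. \<sigma> i j) / (2 * t * (1 - t) * \<eta>) *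
          (norm (z $ j - t *\<^sub>R y $ j
                 - (1 - t) *\<^sub>R ((1 / (\<Sum>i\<in>UNIV. \<sigma> i j)) *\<^sub>R (\<Sum>i\<in>UNIV. \<sigma> i j *\<^sub>R x $ i))))\<^sup>2)
     = 1/2 * (\<Sum>j\<in>UNIV. Sj j / (\<eta> * t * (1-t)) * (norm (e j))\<^sup>2)"
  proof -
    have aux: "a / (2 * t * (1 - t) * \<eta>) * b = 1/2 * (a / (\<eta> * t * (1 - t)) * b)" for a b :: real
      using t \<eta> by (simp add: field_simps)
    show ?thesis unfolding sum_distrib_left e_def xb_def Sj_def by (intro sum.cong refl) (rule aux)
  qed
  show ?thesis unfolding eqc h1 h2 h3 using main by linarith
qed


definition xbar :: "('n::finite \<Rightarrow> 'm::finite \<Rightarrow> real) \<Rightarrow> 'a::real_vector^'n \<Rightarrow> 'm \<Rightarrow> 'a" where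
  "xbar \<sigma> x j = (1 / (\<Sum>i\<in>UNIV. \<sigma> i j)) *\<^sub>R (\<Sum>i\<in>UNIV. \<sigma> i j *\<^sub>R x $ i)"

definition ee :: "real \<Rightarrow> ('n::finite \<Rightarrow> 'm::finite \<Rightarrow> real) \<Rightarrow> 'a::real_vector^'n \<Rightarrow> 'a^'m \<Rightarrow> 'a^'m \<Rightarrow> 'm \<Rightarrow> 'a" where
  "ee t \<sigma> x y z j = z $ j - t *\<^sub>R y $ j - (1 - t) *\<^sub>R xbar \<sigma> x j"

lemma xbar_comb: "xbar \<sigma> (s *\<^sub>R x0 + (1-s) *\<^sub>R x1) j = s *\<^sub>R xbar \<sigma> x0 j + (1-s) *\<^sub>R xbar \<sigma> x1 j"
proof -
  have "(\<Sum>i\<in>UNIV. \<sigma> i j *\<^sub>R (s *\<^sub>R x0 + (1-s) *\<^sub>R x1) $ i)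
      = (\<Sum>i\<in>UNIV. s *\<^sub>R (\<sigma> i j *\<^sub>R x0 $ i) + (1-s) *\<^sub>R (\<sigma> i j *\<^sub>R x1 $ i))"
    by (intro sum.cong refl) (simp add: scaleR_add_right mult.commute)
  also have "\<dots> = s *\<^sub>R (\<Sum>i\<in>UNIV. \<sigma> i j *\<^sub>R x0 $ i) + (1-s) *\<^sub>R (\<Sum>i\<in>UNIV. \<sigma> i j *\<^sub>R x1 $ i)"
    by (simp add: sum.distrib scaleR_sum_right)
  finally show ?thesis unfolding xbar_def by (simp add: scaleR_add_right)
qed

lemma xbar_diff: "xbar \<sigma> (x0 - x1) j = xbar \<sigma> x0 j - xbar \<sigma> x1 j"
proof -
  have "(\<Sum>i\<in>UNIV. \<sigma> i j *\<^sub>R (x0 - x1) $ i) = (\<Sum>i\<in>UNIV. \<sigma> i j *\<^sub>R x0 $ i) - (\<Sum>i\<in>UNIV. \<sigma> i j *\<^sub>R x1 $ i)"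
    by (simp add: scaleR_diff_right sum_subtractf)
  then show ?thesis unfolding xbar_def by (simp add: scaleR_diff_right)
qed

lemma ee_comb:
  "ee t \<sigma> (s *\<^sub>R x0 + (1-s) *\<^sub>R x1) (s *\<^sub>R y0 + (1-s) *\<^sub>R y1) (s *\<^sub>R z0 + (1-s) *\<^sub>R z1) j
   = s *\<^sub>R ee t \<sigma> x0 y0 z0 j + (1-s) *\<^sub>R ee t \<sigma> x1 y1 z1 j"
  unfolding ee_def xbar_comb by (simp add: algebra_simps)

lemma ee_diff:
  "ee t \<sigma> x0 y0 z0 j - ee t \<sigma> x1 y1 z1 j = ee t \<sigma> (x0 - x1) (y0 - y1) (z0 - z1) j"
  unfolding ee_def xbar_diff by (simp add: algebra_simps)

lemma pot_eq: "potential_t \<eta> t \<sigma> f g x y z =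
     (\<Sum>i\<in>UNIV. f i (x $ i)) + (\<Sum>j\<in>UNIV. g j (y $ j))
     + (\<Sum>i\<in>UNIV. \<Sum>j\<in>UNIV. \<sigma> i j / (2 * \<eta>) * (norm (x $ i - y $ j))\<^sup>2)
     + (\<Sum>j\<in>UNIV. (\<Sum>i\<in>UNIV. \<sigma> i j) / (2 * t * (1 - t) * \<eta>) * (norm (ee t \<sigma> x y z j))\<^sup>2)"
  unfolding potential_t_def ee_def xbar_def ..

lemma sum_conv:
  fixes a b c d :: "'i \<Rightarrow> real"
  assumes "\<And>i. i \<in> A \<Longrightarrow> a i \<le> s * b i + (1-s) * c i - s*(1-s) * d i"
  shows "(\<Sum>i\<in>A. a i) \<le> s * (\<Sum>i\<in>A. b i) + (1-s) * (\<Sum>i\<in>A. c i) - s*(1-s) * (\<Sum>i\<in>A. d i)"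
proof -
  have "(\<Sum>i\<in>A. a i) \<le> (\<Sum>i\<in>A. s * b i + (1-s) * c i - s*(1-s) * d i)"
    by (rule sum_mono) (rule assms)
  also have "\<dots> = s * (\<Sum>i\<in>A. b i) + (1-s) * (\<Sum>i\<in>A. c i) - s*(1-s) * (\<Sum>i\<in>A. d i)"
    by (simp add: sum.distrib sum_subtractf sum_distrib_left)
  finally show ?thesis .
qed

lemma VCONV:
  fixes x0 x1 :: "'a::euclidean_space^'n::finite" and y0 y1 z0 z1 :: "'a^'m::finite"
  assumes \<eta>: "0 < \<eta>" and t: "0 < t" "t < 1"
    and scf: "\<And>i. strongly_convex (\<alpha>f i) (f i)" and scg: "\<And>j. strongly_convex (\<alpha>g j) (g j)"
    and \<sigma>0: "\<And>i j. 0 \<le> \<sigma> i j" and s: "0 \<le> s" "s \<le> 1"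
  shows "potential_t \<eta> t \<sigma> f g (s *\<^sub>R x0 + (1-s) *\<^sub>R x1) (s *\<^sub>R y0 + (1-s) *\<^sub>R y1) (s *\<^sub>R z0 + (1-s) *\<^sub>R z1)
    \<le> s * potential_t \<eta> t \<sigma> f g x0 y0 z0 + (1-s) * potential_t \<eta> t \<sigma> f g x1 y1 z1
       - s*(1-s) * ((\<Sum>i\<in>UNIV. \<alpha>f i / 2 * (norm ((x0 - x1)$i))\<^sup>2) + (\<Sum>j\<in>UNIV. \<alpha>g j / 2 * (norm ((y0 - y1)$j))\<^sup>2)
          + (\<Sum>j\<in>UNIV. (\<Sum>i\<in>UNIV. \<sigma> i j) / (2 * t * (1 - t) * \<eta>) * (norm (ee t \<sigma> (x0 - x1) (y0 - y1) (z0 - z1) j))\<^sup>2))"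
proof -
  have s1: "0 \<le> s*(1-s)" using s by simp
  have F: "(\<Sum>i\<in>UNIV. f i ((s *\<^sub>R x0 + (1-s) *\<^sub>R x1) $ i))
     \<le> s * (\<Sum>i\<in>UNIV. f i (x0 $ i)) + (1-s) * (\<Sum>i\<in>UNIV. f i (x1 $ i)) - s*(1-s) * (\<Sum>i\<in>UNIV. \<alpha>f i / 2 * (norm ((x0 - x1)$i))\<^sup>2)"
  proof (rule sum_conv)
    fix i :: 'n
    have "f i (s *\<^sub>R x0 $ i + (1-s) *\<^sub>R x1 $ i) \<le> s * f i (x0 $ i) + (1-s) * f i (x1 $ i) - \<alpha>f i / 2 * s * (1-s) * (norm (x0 $ i - x1 $ i))\<^sup>2"
      using scf[of i] s unfolding strongly_convex_def by blast
    then show "f i ((s *\<^sub>R x0 + (1-s) *\<^sub>R x1) $ i) \<le> s * f i (x0 $ i) + (1-s) * f i (x1 $ i) - s*(1-s) * (\<alpha>f i / 2 * (norm ((x0 - x1)$i))\<^sup>2)"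
      by (simp add: mult_ac)
  qed
  have G: "(\<Sum>j\<in>UNIV. g j ((s *\<^sub>R y0 + (1-s) *\<^sub>R y1) $ j))
     \<le> s * (\<Sum>j\<in>UNIV. g j (y0 $ j)) + (1-s) * (\<Sum>j\<in>UNIV. g j (y1 $ j)) - s*(1-s) * (\<Sum>j\<in>UNIV. \<alpha>g j / 2 * (norm ((y0 - y1)$j))\<^sup>2)"
  proof (rule sum_conv)
    fix j :: 'm
    have "g j (s *\<^sub>R y0 $ j + (1-s) *\<^sub>R y1 $ j) \<le> s * g j (y0 $ j) + (1-s) * g j (y1 $ j) - \<alpha>g j / 2 * s * (1-s) * (norm (y0 $ j - y1 $ j))\<^sup>2"
      using scg[of j] s unfolding strongly_convex_def by blast
    then show "g j ((s *\<^sub>R y0 + (1-s) *\<^sub>R y1) $ j) \<le> s * g j (y0 $ j) + (1-s) * g j (y1 $ j) - s*(1-s) * (\<alpha>g j / 2 * (norm ((y0 - y1)$j))\<^sup>2)"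
      by (simp add: mult_ac)
  qed
  have Cp: "(\<Sum>i\<in>UNIV. \<Sum>j\<in>UNIV. \<sigma> i j / (2 * \<eta>) * (norm ((s *\<^sub>R x0 + (1-s) *\<^sub>R x1) $ i - (s *\<^sub>R y0 + (1-s) *\<^sub>R y1) $ j))\<^sup>2)
     \<le> s * (\<Sum>i\<in>UNIV. \<Sum>j\<in>UNIV. \<sigma> i j / (2 * \<eta>) * (norm (x0 $ i - y0 $ j))\<^sup>2)
       + (1-s) * (\<Sum>i\<in>UNIV. \<Sum>j\<in>UNIV. \<sigma> i j / (2 * \<eta>) * (norm (x1 $ i - y1 $ j))\<^sup>2) - s*(1-s) * (\<Sum>i\<in>(UNIV::'n set). 0)"
  proof (rule sum_conv)
    fix i :: 'n
    show "(\<Sum>j\<in>UNIV. \<sigma> i j / (2 * \<eta>) * (norm ((s *\<^sub>R x0 + (1-s) *\<^sub>R x1) $ i - (s *\<^sub>R y0 + (1-s) *\<^sub>R y1) $ j))\<^sup>2)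
     \<le> s * (\<Sum>j\<in>UNIV. \<sigma> i j / (2 * \<eta>) * (norm (x0 $ i - y0 $ j))\<^sup>2)
       + (1-s) * (\<Sum>j\<in>UNIV. \<sigma> i j / (2 * \<eta>) * (norm (x1 $ i - y1 $ j))\<^sup>2) - s*(1-s) * 0"
    proof -
      have "(\<Sum>j\<in>UNIV. \<sigma> i j / (2 * \<eta>) * (norm ((s *\<^sub>R x0 + (1-s) *\<^sub>R x1) $ i - (s *\<^sub>R y0 + (1-s) *\<^sub>R y1) $ j))\<^sup>2)
       \<le> s * (\<Sum>j\<in>UNIV. \<sigma> i j / (2 * \<eta>) * (norm (x0 $ i - y0 $ j))\<^sup>2)
       + (1-s) * (\<Sum>j\<in>UNIV. \<sigma> i j / (2 * \<eta>) * (norm (x1 $ i - y1 $ j))\<^sup>2) - s*(1-s) * (\<Sum>j\<in>(UNIV::'m set). 0)"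
      proof (rule sum_conv)
        fix j :: 'm
        have k0: "0 \<le> \<sigma> i j / (2 * \<eta>)" using \<sigma>0 \<eta> by simp
        have e: "(s *\<^sub>R x0 + (1-s) *\<^sub>R x1) $ i - (s *\<^sub>R y0 + (1-s) *\<^sub>R y1) $ j
           = s *\<^sub>R (x0 $ i - y0 $ j) + (1-s) *\<^sub>R (x1 $ i - y1 $ j)"
          by (simp add: algebra_simps)
        have "(norm ((s *\<^sub>R x0 + (1-s) *\<^sub>R x1) $ i - (s *\<^sub>R y0 + (1-s) *\<^sub>R y1) $ j))\<^sup>2
          \<le> s * (norm (x0 $ i - y0 $ j))\<^sup>2 + (1-s) * (norm (x1 $ i - y1 $ j))\<^sup>2"
          unfolding e sq_comb using s1 by simp
        then have "\<sigma> i j / (2 * \<eta>) * (norm ((s *\<^sub>R x0 + (1-s) *\<^sub>R x1) $ i - (s *\<^sub>R y0 + (1-s) *\<^sub>R y1) $ j))\<^sup>2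
          \<le> \<sigma> i j / (2 * \<eta>) * (s * (norm (x0 $ i - y0 $ j))\<^sup>2 + (1-s) * (norm (x1 $ i - y1 $ j))\<^sup>2)"
          by (rule mult_left_mono[OF _ k0])
        also have "\<sigma> i j / (2 * \<eta>) * (s * (norm (x0 $ i - y0 $ j))\<^sup>2 + (1-s) * (norm (x1 $ i - y1 $ j))\<^sup>2)
          = s * (\<sigma> i j / (2 * \<eta>) * (norm (x0 $ i - y0 $ j))\<^sup>2) + (1-s) * (\<sigma> i j / (2 * \<eta>) * (norm (x1 $ i - y1 $ j))\<^sup>2) - s*(1-s) * 0"
          by (simp only: ring_distribs mult_ac)
        finally show "\<sigma> i j / (2 * \<eta>) * (norm ((s *\<^sub>R x0 + (1-s) *\<^sub>R x1) $ i - (s *\<^sub>R y0 + (1-s) *\<^sub>R y1) $ j))\<^sup>2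
          \<le> s * (\<sigma> i j / (2 * \<eta>) * (norm (x0 $ i - y0 $ j))\<^sup>2) + (1-s) * (\<sigma> i j / (2 * \<eta>) * (norm (x1 $ i - y1 $ j))\<^sup>2) - s*(1-s) * 0" .
      qed
      then show ?thesis by simp
    qed
  qed
  have Zt: "(\<Sum>j\<in>UNIV. (\<Sum>i\<in>UNIV. \<sigma> i j) / (2 * t * (1 - t) * \<eta>) * (norm (ee t \<sigma> (s *\<^sub>R x0 + (1-s) *\<^sub>R x1) (s *\<^sub>R y0 + (1-s) *\<^sub>R y1) (s *\<^sub>R z0 + (1-s) *\<^sub>R z1) j))\<^sup>2)
     \<le> s * (\<Sum>j\<in>UNIV. (\<Sum>i\<in>UNIV. \<sigma> i j) / (2 * t * (1 - t) * \<eta>) * (norm (ee t \<sigma> x0 y0 z0 j))\<^sup>2)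
       + (1-s) * (\<Sum>j\<in>UNIV. (\<Sum>i\<in>UNIV. \<sigma> i j) / (2 * t * (1 - t) * \<eta>) * (norm (ee t \<sigma> x1 y1 z1 j))\<^sup>2)
       - s*(1-s) * (\<Sum>j\<in>UNIV. (\<Sum>i\<in>UNIV. \<sigma> i j) / (2 * t * (1 - t) * \<eta>) * (norm (ee t \<sigma> (x0 - x1) (y0 - y1) (z0 - z1) j))\<^sup>2)"
  proof (rule sum_conv)
    fix j :: 'm
    define k where "k = (\<Sum>i\<in>UNIV. \<sigma> i j) / (2 * t * (1 - t) * \<eta>)"
    have eqN: "(norm (ee t \<sigma> (s *\<^sub>R x0 + (1-s) *\<^sub>R x1) (s *\<^sub>R y0 + (1-s) *\<^sub>R y1) (s *\<^sub>R z0 + (1-s) *\<^sub>R z1) j))\<^sup>2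
      = s * (norm (ee t \<sigma> x0 y0 z0 j))\<^sup>2 + (1-s) * (norm (ee t \<sigma> x1 y1 z1 j))\<^sup>2 - s*(1-s) * (norm (ee t \<sigma> (x0 - x1) (y0 - y1) (z0 - z1) j))\<^sup>2"
      unfolding ee_comb sq_comb ee_diff ..
    show "k * (norm (ee t \<sigma> (s *\<^sub>R x0 + (1-s) *\<^sub>R x1) (s *\<^sub>R y0 + (1-s) *\<^sub>R y1) (s *\<^sub>R z0 + (1-s) *\<^sub>R z1) j))\<^sup>2
      \<le> s * (k * (norm (ee t \<sigma> x0 y0 z0 j))\<^sup>2) + (1-s) * (k * (norm (ee t \<sigma> x1 y1 z1 j))\<^sup>2) - s*(1-s) * (k * (norm (ee t \<sigma> (x0 - x1) (y0 - y1) (z0 - z1) j))\<^sup>2)"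
      unfolding eqN by (simp only: ring_distribs mult_ac order_refl)
  qed
  show ?thesis unfolding pot_eq using F G Cp Zt by (simp add: algebra_simps)
qed


lemma cont_comp_f:
  fixes f :: "'a::topological_space \<Rightarrow> real"
  assumes "continuous_on UNIV f" "continuous_on UNIV h"
  shows "continuous_on UNIV (\<lambda>p. f (h p))"
  using continuous_on_compose2[OF assms(1) assms(2)] by simp

lemma pot_cont:
  fixes f :: "'n::finite \<Rightarrow> 'a::euclidean_space \<Rightarrow> real" and g :: "'m::finite \<Rightarrow> 'a \<Rightarrow> real"
  assumes cf: "\<And>i. continuous_on UNIV (f i)" and cg: "\<And>j. continuous_on UNIV (g j)"
    and cx: "continuous_on UNIV (X :: 'p::topological_space \<Rightarrow> 'a^'n)"
    and cy: "continuous_on UNIV (Y :: 'p \<Rightarrow> 'a^'m)" and cz: "continuous_on UNIV (Z :: 'p \<Rightarrow> 'a^'m)"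
  shows "continuous_on UNIV (\<lambda>p. potential_t \<eta> t \<sigma> f g (X p) (Y p) (Z p))"
  unfolding potential_t_def
  by (intro continuous_intros cont_comp_f[OF cf] cont_comp_f[OF cg] cx cy cz)

lemma min_pos_range: "(\<And>i. 0 < h i) \<Longrightarrow> 0 < Min (range (h :: 'i::finite \<Rightarrow> real))"
  using Min_in[of "range h"] by auto

lemma min_le_range: "Min (range (h :: 'i::finite \<Rightarrow> real)) \<le> h i"
  by (rule Min_le) auto

lemma V_lower:
  fixes f :: "'n::finite \<Rightarrow> 'a::euclidean_space \<Rightarrow> real" and g :: "'m::finite \<Rightarrow> 'a \<Rightarrow> real"
    and \<sigma> :: "'n \<Rightarrow> 'm \<Rightarrow> real"
  assumes \<eta>: "0 < \<eta>" and t: "0 < t" "t < 1"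
    and af: "\<And>i. 0 < \<alpha>f i" and scf: "\<And>i. strongly_convex (\<alpha>f i) (f i)"
    and ag: "\<And>j. 0 < \<alpha>g j" and scg: "\<And>j. strongly_convex (\<alpha>g j) (g j)"
    and \<sigma>0: "\<And>i j. 0 \<le> \<sigma> i j" and S: "\<And>j. 0 < (\<Sum>i\<in>UNIV. \<sigma> i j)"
  shows "\<exists>\<epsilon>>0. \<exists>K. \<forall>x y z. \<epsilon> * ((norm x)\<^sup>2 + (norm y)\<^sup>2 + (norm z)\<^sup>2) - K \<le> potential_t \<eta> t \<sigma> f g x y z"
proof -
  have "\<forall>i. \<exists>K. \<forall>u. \<alpha>f i/4 * (norm u)\<^sup>2 - K \<le> f i u" using sc_lower[OF scf af] by blast
  then obtain Kf where Kf: "\<And>i u. \<alpha>f i/4 * (norm u)\<^sup>2 - Kf i \<le> f i u" by metis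
  have "\<forall>j. \<exists>K. \<forall>u. \<alpha>g j/4 * (norm u)\<^sup>2 - K \<le> g j u" using sc_lower[OF scg ag] by blast
  then obtain Kg where Kg: "\<And>j u. \<alpha>g j/4 * (norm u)\<^sup>2 - Kg j \<le> g j u" by metis
  define a1 where "a1 = Min (range \<alpha>f) / 8"
  define a2 where "a2 = Min (range \<alpha>g) / 8"
  have m1: "0 < Min (range \<alpha>f)" by (rule min_pos_range) (rule af)
  have m2: "0 < Min (range \<alpha>g)" by (rule min_pos_range) (rule ag)
  have a1: "0 < a1" "\<And>i. a1 \<le> \<alpha>f i / 8" unfolding a1_def using m1
    by (auto intro: divide_right_mono min_le_range)
  have a2: "0 < a2" "\<And>j. a2 \<le> \<alpha>g j / 8" unfolding a2_def using m2
    by (auto intro: divide_right_mono min_le_range)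
  define cq where "cq = 1 / (\<eta> * t * (1 - t) / Min (range (\<lambda>j. \<Sum>i\<in>UNIV. \<sigma> i j))
                 + real (CARD('m) * CARD('n)) * (1 - t)\<^sup>2 / Min (range (\<lambda>i. \<alpha>f i / 4))
                 + t\<^sup>2 / Min (range (\<lambda>j. \<alpha>g j / 4)))"
  have mS: "0 < Min (range (\<lambda>j. \<Sum>i\<in>UNIV. \<sigma> i j))" by (rule min_pos_range) (rule S)
  have mf4: "0 < Min (range (\<lambda>i. \<alpha>f i / 4))" by (rule min_pos_range) (use af in simp)
  have mg4: "0 < Min (range (\<lambda>j. \<alpha>g j / 4))" by (rule min_pos_range) (use ag in simp)
  have cq: "0 < cq" unfolding cq_def
    using mS mf4 mg4 \<eta> t by (intro divide_pos_pos add_pos_pos) auto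
  define \<epsilon> where "\<epsilon> = min (min a1 a2) (cq / 2)"
  have \<epsilon>: "0 < \<epsilon>" "\<epsilon> \<le> a1" "\<epsilon> \<le> a2" "\<epsilon> \<le> cq/2" unfolding \<epsilon>_def using a1 a2 cq by auto
  define K where "K = (\<Sum>i\<in>UNIV. Kf i) + (\<Sum>j\<in>UNIV. Kg j)"
  show ?thesis
  proof (intro exI conjI allI)
    show "0 < \<epsilon>" by (rule \<epsilon>)
    fix x :: "'a^'n" and y z :: "'a^'m"
    define Zt where "Zt = (\<Sum>j\<in>UNIV. (\<Sum>i\<in>UNIV. \<sigma> i j) / (2 * t * (1 - t) * \<eta>) *
          (norm (z $ j - t *\<^sub>R y $ j
                 - (1 - t) *\<^sub>R ((1 / (\<Sum>i\<in>UNIV. \<sigma> i j)) *\<^sub>R (\<Sum>i\<in>UNIV. \<sigma> i j *\<^sub>R x $ i))))\<^sup>2)"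
    define Cp where "Cp = (\<Sum>i\<in>UNIV. \<Sum>j\<in>UNIV. \<sigma> i j / (2 * \<eta>) * (norm (x $ i - y $ j))\<^sup>2)"
    define X2 where "X2 = (\<Sum>i\<in>UNIV. (norm (x$i))\<^sup>2)"
    define Y2 where "Y2 = (\<Sum>j\<in>UNIV. (norm (y$j))\<^sup>2)"
    have nx: "(norm x)\<^sup>2 = X2" unfolding X2_def by (rule norm_vec_sq)
    have ny: "(norm y)\<^sup>2 = Y2" unfolding Y2_def by (rule norm_vec_sq)
    have V: "potential_t \<eta> t \<sigma> f g x y z = (\<Sum>i\<in>UNIV. f i (x $ i)) + (\<Sum>j\<in>UNIV. g j (y $ j)) + Cp + Zt"
      unfolding potential_t_def Zt_def Cp_def ..
    have Cp0: "0 \<le> Cp" unfolding Cp_def using \<sigma>0 \<eta> by (intro sum_nonneg mult_nonneg_nonneg) auto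
    have Q: "cq / 2 * (norm z)\<^sup>2 \<le> (\<Sum>i\<in>UNIV. \<alpha>f i / 4 / 2 * (norm (x$i))\<^sup>2) + (\<Sum>j\<in>UNIV. \<alpha>g j / 4 / 2 * (norm (y$j))\<^sup>2) + Zt"
      unfolding cq_def Zt_def
      by (rule QUAD[of \<eta> t "\<lambda>i. \<alpha>f i / 4" "\<lambda>j. \<alpha>g j / 4" \<sigma> z x y]) (use \<eta> t af ag \<sigma>0 S in auto)
    have Fb: "(\<Sum>i\<in>UNIV. f i (x $ i)) \<ge> (\<Sum>i\<in>UNIV. \<alpha>f i / 4 / 2 * (norm (x$i))\<^sup>2) + a1 * X2 - (\<Sum>i\<in>UNIV. Kf i)"
    proof -
      have "(\<Sum>i\<in>UNIV. \<alpha>f i / 4 / 2 * (norm (x$i))\<^sup>2) + a1 * X2 - (\<Sum>i\<in>UNIV. Kf i)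
          = (\<Sum>i\<in>UNIV. \<alpha>f i / 4 / 2 * (norm (x$i))\<^sup>2 + a1 * (norm (x$i))\<^sup>2 - Kf i)"
        unfolding X2_def by (simp add: sum.distrib sum_subtractf sum_distrib_left)
      also have "\<dots> \<le> (\<Sum>i\<in>UNIV. f i (x $ i))"
      proof (rule sum_mono)
        fix i :: 'n
        have "a1 * (norm (x$i))\<^sup>2 \<le> \<alpha>f i / 8 * (norm (x$i))\<^sup>2" using a1(2)[of i] by (intro mult_right_mono) auto
        then show "\<alpha>f i / 4 / 2 * (norm (x$i))\<^sup>2 + a1 * (norm (x$i))\<^sup>2 - Kf i \<le> f i (x $ i)"
          using Kf[of i "x$i"] by simp
      qed
      finally show ?thesis by simp
    qed
    have Gb: "(\<Sum>j\<in>UNIV. g j (y $ j)) \<ge> (\<Sum>j\<in>UNIV. \<alpha>g j / 4 / 2 * (norm (y$j))\<^sup>2) + a2 * Y2 - (\<Sum>j\<in>UNIV. Kg j)"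
    proof -
      have "(\<Sum>j\<in>UNIV. \<alpha>g j / 4 / 2 * (norm (y$j))\<^sup>2) + a2 * Y2 - (\<Sum>j\<in>UNIV. Kg j)
          = (\<Sum>j\<in>UNIV. \<alpha>g j / 4 / 2 * (norm (y$j))\<^sup>2 + a2 * (norm (y$j))\<^sup>2 - Kg j)"
        unfolding Y2_def by (simp add: sum.distrib sum_subtractf sum_distrib_left)
      also have "\<dots> \<le> (\<Sum>j\<in>UNIV. g j (y $ j))"
      proof (rule sum_mono)
        fix j :: 'm
        have "a2 * (norm (y$j))\<^sup>2 \<le> \<alpha>g j / 8 * (norm (y$j))\<^sup>2" using a2(2)[of j] by (intro mult_right_mono) auto
        then show "\<alpha>g j / 4 / 2 * (norm (y$j))\<^sup>2 + a2 * (norm (y$j))\<^sup>2 - Kg j \<le> g j (y $ j)"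
          using Kg[of j "y$j"] by simp
      qed
      finally show ?thesis by simp
    qed
    have X0: "0 \<le> X2" "0 \<le> Y2" unfolding X2_def Y2_def by (auto intro: sum_nonneg)
    have e1: "\<epsilon> * X2 \<le> a1 * X2" using \<epsilon> X0 by (intro mult_right_mono) auto
    have e2: "\<epsilon> * Y2 \<le> a2 * Y2" using \<epsilon> X0 by (intro mult_right_mono) auto
    have e3: "\<epsilon> * (norm z)\<^sup>2 \<le> cq/2 * (norm z)\<^sup>2" using \<epsilon> by (intro mult_right_mono) auto
    show "\<epsilon> * ((norm x)\<^sup>2 + (norm y)\<^sup>2 + (norm z)\<^sup>2) - K \<le> potential_t \<eta> t \<sigma> f g x y z"
      unfolding V nx ny K_def using Fb Gb Q Cp0 e1 e2 e3 by (simp add: distrib_left)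
  qed
qed


lemma nn_integral_pos_eucl:
  fixes F :: "'e::euclidean_space \<Rightarrow> real"
  assumes [measurable]: "F \<in> borel_measurable borel" and pos: "\<And>u. 0 < F u"
  shows "0 < (\<integral>\<^sup>+u. ennreal (F u) \<partial>lborel)"
proof (rule ccontr)
  assume "\<not> ?thesis"
  then have "(\<integral>\<^sup>+u. ennreal (F u) \<partial>lborel) = 0" by (simp add: not_less)
  then have ae: "AE u in lborel. ennreal (F u) = 0" by (subst (asm) nn_integral_0_iff_AE) auto
  have "AE u in (lborel :: 'e measure). False"
  proof (rule eventually_mono[OF ae])
    fix u assume "ennreal (F u) = 0"
    then show False using pos[of u] by (simp add: ennreal_eq_0_iff)
  qed
  then have "ae_filter (lborel :: 'e measure) = bot" by (simp add: eventually_False)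
  then have "emeasure (lborel :: 'e measure) (space lborel) = 0" by (simp add: ae_filter_eq_bot_iff)
  then show False by simp
qed

lemma exp_powr_real: "exp (a::real) powr (s::real) = exp (s * a)"
  by (simp add: powr_def)

lemma GC:
  fixes f :: "'n::finite \<Rightarrow> 'a::euclidean_space \<Rightarrow> real" and g :: "'m::finite \<Rightarrow> 'a \<Rightarrow> real"
    and \<sigma> :: "'n \<Rightarrow> 'm \<Rightarrow> real" and x0 x1 :: "'a^'n" and y0 y1 z0 z1 :: "'a^'m"
  assumes \<eta>: "0 < \<eta>" and t: "0 < t" "t < 1"
    and af: "\<And>i. 0 < \<alpha>f i" and scf: "\<And>i. strongly_convex (\<alpha>f i) (f i)"
    and ag: "\<And>j. 0 < \<alpha>g j" and scg: "\<And>j. strongly_convex (\<alpha>g j) (g j)"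
    and \<sigma>0: "\<And>i j. 0 \<le> \<sigma> i j" and S: "\<And>j. 0 < (\<Sum>i\<in>UNIV. \<sigma> i j)"
    and s: "0 \<le> s" "s \<le> 1"
  defines "C \<equiv> 1 / (\<eta> * t * (1 - t) / Min (range (\<lambda>j. \<Sum>i\<in>UNIV. \<sigma> i j))
                 + real (CARD('m) * CARD('n)) * (1 - t)\<^sup>2 / Min (range \<alpha>f)
                 + t\<^sup>2 / Min (range \<alpha>g))"
  shows "potential_t \<eta> t \<sigma> f g (s *\<^sub>R x0 + (1-s) *\<^sub>R x1) (s *\<^sub>R y0 + (1-s) *\<^sub>R y1) (s *\<^sub>R z0 + (1-s) *\<^sub>R z1)
           - C/2 * (norm (s *\<^sub>R z0 + (1-s) *\<^sub>R z1))\<^sup>2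
         \<le> s * (potential_t \<eta> t \<sigma> f g x0 y0 z0 - C/2 * (norm z0)\<^sup>2)
           + (1-s) * (potential_t \<eta> t \<sigma> f g x1 y1 z1 - C/2 * (norm z1)\<^sup>2)"
proof -
  define Q where "Q = (\<Sum>i\<in>UNIV. \<alpha>f i / 2 * (norm ((x0 - x1)$i))\<^sup>2) + (\<Sum>j\<in>UNIV. \<alpha>g j / 2 * (norm ((y0 - y1)$j))\<^sup>2)
          + (\<Sum>j\<in>UNIV. (\<Sum>i\<in>UNIV. \<sigma> i j) / (2 * t * (1 - t) * \<eta>) * (norm (ee t \<sigma> (x0 - x1) (y0 - y1) (z0 - z1) j))\<^sup>2)"
  have V: "potential_t \<eta> t \<sigma> f g (s *\<^sub>R x0 + (1-s) *\<^sub>R x1) (s *\<^sub>R y0 + (1-s) *\<^sub>R y1) (s *\<^sub>R z0 + (1-s) *\<^sub>R z1)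
    \<le> s * potential_t \<eta> t \<sigma> f g x0 y0 z0 + (1-s) * potential_t \<eta> t \<sigma> f g x1 y1 z1 - s*(1-s) * Q"
    unfolding Q_def by (rule VCONV[OF \<eta> t scf scg \<sigma>0 s])
  have q: "C / 2 * (norm (z0 - z1))\<^sup>2 \<le> Q"
    unfolding Q_def C_def ee_def xbar_def by (rule QUAD[OF \<eta> t af ag \<sigma>0 S])
  have s1: "0 \<le> s*(1-s)" using s by simp
  have q2: "s*(1-s) * (C / 2 * (norm (z0 - z1))\<^sup>2) \<le> s*(1-s) * Q" by (rule mult_left_mono[OF q s1])
  have n: "(norm (s *\<^sub>R z0 + (1-s) *\<^sub>R z1))\<^sup>2 = s * (norm z0)\<^sup>2 + (1-s) * (norm z1)\<^sup>2 - s*(1-s) * (norm (z0 - z1))\<^sup>2"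
    by (rule sq_comb)
  have "C/2 * (norm (s *\<^sub>R z0 + (1-s) *\<^sub>R z1))\<^sup>2 = s * (C/2 * (norm z0)\<^sup>2) + (1-s) * (C/2 * (norm z1)\<^sup>2) - s*(1-s) * (C / 2 * (norm (z0 - z1))\<^sup>2)"
    unfolding n by (simp add: field_simps)
  then show ?thesis using V q2 by (simp add: algebra_simps)
qed

lemma exp_LC:
  fixes A0 A1 As s :: real
  assumes "As \<le> s * A0 + (1-s) * A1"
  shows "exp (- A0) powr s * exp (- A1) powr (1-s) \<le> exp (- As)"
proof -
  have "exp (- A0) powr s * exp (- A1) powr (1-s) = exp (- (s * A0 + (1-s) * A1))"
    by (simp add: exp_powr_real exp_add[symmetric])
  also have "\<dots> \<le> exp (- As)" using assms by simp
  finally show ?thesis .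
qed

theorem mainTheorem8:
  fixes \<eta> t :: real
    and \<sigma> :: "'n::finite \<Rightarrow> 'm::finite \<Rightarrow> real"
    and f :: "'n \<Rightarrow> 'a::euclidean_space \<Rightarrow> real"
    and g :: "'m \<Rightarrow> 'a \<Rightarrow> real"
    and \<alpha>f :: "'n \<Rightarrow> real" and \<alpha>g :: "'m \<Rightarrow> real"
  assumes "\<eta> > 0" and "0 < t" and "t < 1"
    and "\<And>i. \<alpha>f i > 0" and "\<And>i. strongly_convex (\<alpha>f i) (f i)"
    and "\<And>j. \<alpha>g j > 0" and "\<And>j. strongly_convex (\<alpha>g j) (g j)"
    and "\<And>i j. 0 \<le> \<sigma> i j \<and> \<sigma> i j \<le> 1"
    and "\<And>j. (\<Sum>i\<in>UNIV. \<sigma> i j) > 0"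
    and "\<And>i. (\<Sum>j\<in>UNIV. \<sigma> i j) > 0"
  shows "strongly_log_concave
           (1 / (\<eta> * t * (1 - t) / Min (range (\<lambda>j. \<Sum>i\<in>UNIV. \<sigma> i j))
                 + real (CARD('m) * CARD('n)) * (1 - t)\<^sup>2 / Min (range \<alpha>f)
                 + t\<^sup>2 / Min (range \<alpha>g)))
           (z_marginal \<eta> t \<sigma> f g)"
proof -
  note \<eta> = assms(1) and t = assms(2,3) and af = assms(4) and scf = assms(5)
    and ag = assms(6) and scg = assms(7) and S = assms(9)
  have \<sigma>0: "\<And>i j. 0 \<le> \<sigma> i j" using assms(8) by blast
  define C where "C = 1 / (\<eta> * t * (1 - t) / Min (range (\<lambda>j. \<Sum>i\<in>UNIV. \<sigma> i j))
                 + real (CARD('m) * CARD('n)) * (1 - t)\<^sup>2 / Min (range \<alpha>f)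
                 + t\<^sup>2 / Min (range \<alpha>g))"
  have mS: "0 < Min (range (\<lambda>j. \<Sum>i\<in>UNIV. \<sigma> i j))" by (rule min_pos_range) (rule S)
  have mf: "0 < Min (range \<alpha>f)" by (rule min_pos_range) (rule af)
  have mg: "0 < Min (range \<alpha>g)" by (rule min_pos_range) (rule ag)
  have Cpos: "0 < C" unfolding C_def
    using mS mf mg \<eta> t by (intro divide_pos_pos add_pos_pos) auto
  define V where "V = potential_t \<eta> t \<sigma> f g"
  have cf: "\<And>i. continuous_on UNIV (f i)" by (rule sc_cont[OF scf])
  have cg: "\<And>j. continuous_on UNIV (g j)" by (rule sc_cont[OF scg])
  obtain \<epsilon> K where \<epsilon>: "0 < \<epsilon>" and VL: "\<And>x y z. \<epsilon> * ((norm x)\<^sup>2 + (norm y)\<^sup>2 + (norm z)\<^sup>2) - K \<le> V x y z"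
  proof -
    have "\<exists>\<epsilon>>0. \<exists>K. \<forall>x y z. \<epsilon> * ((norm x)\<^sup>2 + (norm y)\<^sup>2 + (norm z)\<^sup>2) - K \<le> potential_t \<eta> t \<sigma> f g x y z"
      by (rule V_lower[where \<alpha>f=\<alpha>f and \<alpha>g=\<alpha>g]) (use \<eta> t af scf ag scg \<sigma>0 S in auto)
    then show thesis using that unfolding V_def by blast
  qed
  have GCV: "V (s *\<^sub>R x0 + (1-s) *\<^sub>R x1) (s *\<^sub>R y0 + (1-s) *\<^sub>R y1) (s *\<^sub>R z0 + (1-s) *\<^sub>R z1)
           - C/2 * (norm (s *\<^sub>R z0 + (1-s) *\<^sub>R z1))\<^sup>2
         \<le> s * (V x0 y0 z0 - C/2 * (norm z0)\<^sup>2) + (1-s) * (V x1 y1 z1 - C/2 * (norm z1)\<^sup>2)"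
    if "0 \<le> s" "s \<le> 1" for s x0 x1 y0 y1 z0 z1
    unfolding V_def C_def by (rule GC[OF \<eta> t af scf ag scg \<sigma>0 S that])
  have VC: "V (s *\<^sub>R x0 + (1-s) *\<^sub>R x1) (s *\<^sub>R y0 + (1-s) *\<^sub>R y1) (s *\<^sub>R z0 + (1-s) *\<^sub>R z1)
         \<le> s * V x0 y0 z0 + (1-s) * V x1 y1 z1"
    if s: "0 \<le> s" "s \<le> 1" for s x0 x1 y0 y1 z0 z1
  proof -
    have n: "(norm (s *\<^sub>R z0 + (1-s) *\<^sub>R z1))\<^sup>2 = s * (norm z0)\<^sup>2 + (1-s) * (norm z1)\<^sup>2 - s*(1-s) * (norm (z0 - z1))\<^sup>2"
      by (rule sq_comb)
    have "0 \<le> C/2 * (s*(1-s) * (norm (z0 - z1))\<^sup>2)" using Cpos s by simp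
    moreover have "C/2 * (norm (s *\<^sub>R z0 + (1-s) *\<^sub>R z1))\<^sup>2 = s*(C/2*(norm z0)\<^sup>2) + (1-s)*(C/2*(norm z1)\<^sup>2) - C/2 * (s*(1-s) * (norm (z0 - z1))\<^sup>2)"
      unfolding n by (simp add: field_simps)
    moreover have "s * (V x0 y0 z0 - C/2 * (norm z0)\<^sup>2) + (1-s) * (V x1 y1 z1 - C/2 * (norm z1)\<^sup>2)
        = s * V x0 y0 z0 + (1-s) * V x1 y1 z1 - s*(C/2*(norm z0)\<^sup>2) - (1-s)*(C/2*(norm z1)\<^sup>2)"
      by (simp add: right_diff_distrib)
    ultimately show ?thesis using GCV[OF s, of x0 x1 y0 y1 z0 z1] by linarith
  qed
  have Vcont: "continuous_on UNIV (\<lambda>p. V (X p) (Y p) (Z p))"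
    if "continuous_on UNIV X" "continuous_on UNIV Y" "continuous_on UNIV Z" for X :: "'p::topological_space \<Rightarrow> 'a^'n" and Y Z :: "'p \<Rightarrow> 'a^'m"
    unfolding V_def by (rule pot_cont[OF cf cg that])
  define H where "H = (\<lambda>(w::('a^'n) \<times> ('a^'m)) (z::'a^'m). exp (- V (fst w) (snd w) z + C/2 * (norm z)\<^sup>2))"
  have Hm: "(\<lambda>w. H w z) \<in> borel_measurable borel" for z
    unfolding H_def
    by (intro borel_measurable_continuous_onI continuous_intros Vcont) 
  have PKres: "(\<forall>z. (\<integral>\<^sup>+w. ennreal (H w z) \<partial>lborel) < \<infinity>) \<and> LCv (\<lambda>z. enn2real (\<integral>\<^sup>+w. ennreal (H w z) \<partial>lborel))"
  proof (rule PK_eucl[OF \<epsilon> Hm])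
    show "0 \<le> H w z" for w z unfolding H_def by simp
    show "H w0 z0 powr s * H w1 z1 powr (1 - s) \<le> H (s *\<^sub>R w0 + (1 - s) *\<^sub>R w1) (s *\<^sub>R z0 + (1 - s) *\<^sub>R z1)"
      if "0 < s" "s < 1" for w0 w1 z0 z1 and s :: real
    proof -
      have G: "V (s *\<^sub>R fst w0 + (1 - s) *\<^sub>R fst w1) (s *\<^sub>R snd w0 + (1 - s) *\<^sub>R snd w1) (s *\<^sub>R z0 + (1 - s) *\<^sub>R z1)
          - C / 2 * (norm (s *\<^sub>R z0 + (1 - s) *\<^sub>R z1))\<^sup>2
        \<le> s * (V (fst w0) (snd w0) z0 - C / 2 * (norm z0)\<^sup>2) + (1 - s) * (V (fst w1) (snd w1) z1 - C / 2 * (norm z1)\<^sup>2)"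
        using GCV[of s "fst w0" "fst w1" "snd w0" "snd w1" z0 z1] that by simp
      have e: "\<And>a b::real. - a + b = - (a - b)" by simp
      show ?thesis unfolding H_def case_prod_unfold e fst_add snd_add fst_scaleR snd_scaleR
        by (rule exp_LC[OF G])
    qed
    show "\<exists>B. \<forall>w. H w z \<le> B * exp (- \<epsilon> * (norm w)\<^sup>2)" for z
    proof (intro exI allI)
      fix w :: "('a^'n) \<times> ('a^'m)"
      have nw: "(norm w)\<^sup>2 = (norm (fst w))\<^sup>2 + (norm (snd w))\<^sup>2"
        by (cases w) (simp add: norm_Pair)
      have "- V (fst w) (snd w) z + C/2 * (norm z)\<^sup>2 \<le> (K + C/2 * (norm z)\<^sup>2) + (- \<epsilon> * (norm w)\<^sup>2)"
      proof -
        have A: "\<epsilon> * ((norm (fst w))\<^sup>2 + (norm (snd w))\<^sup>2 + (norm z)\<^sup>2) - K \<le> V (fst w) (snd w) z" by (rule VL)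
        have B: "0 \<le> \<epsilon> * (norm z)\<^sup>2" using \<epsilon> by simp
        have D: "\<epsilon> * ((norm (fst w))\<^sup>2 + (norm (snd w))\<^sup>2 + (norm z)\<^sup>2) = \<epsilon> * (norm w)\<^sup>2 + \<epsilon> * (norm z)\<^sup>2"
          unfolding nw by (simp add: algebra_simps)
        show ?thesis using A B D by linarith
      qed
      then show "H w z \<le> exp (K + C/2 * (norm z)\<^sup>2) * exp (- \<epsilon> * (norm w)\<^sup>2)"
        unfolding H_def by (simp add: exp_add[symmetric])
    qed
  qed
  define M where "M = (\<lambda>z. enn2real (\<integral>\<^sup>+w. ennreal (H w z) \<partial>lborel))"
  have eM: "(\<integral>\<^sup>+w. ennreal (H w z) \<partial>lborel) = ennreal (M z)" for z
    unfolding M_def using PKres by (simp add: ennreal_enn2real less_top)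
  have Mpos: "0 < M z" for z
  proof -
    have "0 < (\<integral>\<^sup>+w. ennreal (H w z) \<partial>lborel)"
      by (rule nn_integral_pos_eucl[OF Hm]) (simp add: H_def)
    then show ?thesis unfolding eM by simp
  qed
  have LCM: "LCv M" using PKres unfolding M_def by simp
  have num: "(\<integral>\<^sup>+w. ennreal (exp (- V (fst w) (snd w) z)) \<partial>lborel) = ennreal (exp (- C/2 * (norm z)\<^sup>2) * M z)" for z
  proof -
    have "(\<integral>\<^sup>+w. ennreal (exp (- V (fst w) (snd w) z)) \<partial>lborel)
        = (\<integral>\<^sup>+w. ennreal (exp (- C/2 * (norm z)\<^sup>2)) * ennreal (H w z) \<partial>lborel)"
      unfolding H_def by (intro nn_integral_cong) (simp add: ennreal_mult[symmetric] exp_add[symmetric])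
    also have "\<dots> = ennreal (exp (- C/2 * (norm z)\<^sup>2)) * ennreal (M z)"
      using Hm[of z] by (simp add: nn_integral_cmult eM)
    also have "\<dots> = ennreal (exp (- C/2 * (norm z)\<^sup>2) * M z)" using Mpos[of z] by (simp add: ennreal_mult)
    finally show ?thesis .
  qed
  define H3 where "H3 = (\<lambda>(u::('a^'n) \<times> ('a^'m) \<times> ('a^'m)) (v::real). exp (- V (fst u) (fst (snd u)) (snd (snd u))))"
  have H3m: "(\<lambda>u. H3 u v) \<in> borel_measurable borel" for v
    unfolding H3_def
    by (intro borel_measurable_continuous_onI continuous_intros Vcont) 
  have PK3: "(\<forall>v. (\<integral>\<^sup>+u. ennreal (H3 u v) \<partial>lborel) < \<infinity>) \<and> LCv (\<lambda>v. enn2real (\<integral>\<^sup>+u. ennreal (H3 u v) \<partial>lborel))"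
  proof (rule PK_eucl[OF \<epsilon> H3m])
    show "0 \<le> H3 u v" for u v unfolding H3_def by simp
    show "H3 w0 z0 powr s * H3 w1 z1 powr (1 - s) \<le> H3 (s *\<^sub>R w0 + (1 - s) *\<^sub>R w1) (s *\<^sub>R z0 + (1 - s) *\<^sub>R z1)"
      if "0 < s" "s < 1" for w0 w1 z0 z1 and s :: real
      unfolding H3_def using VC[of s "fst w0" "fst w1" "fst (snd w0)" "fst (snd w1)" "snd (snd w0)" "snd (snd w1)"] that
      by (intro exp_LC) auto
    show "\<exists>B. \<forall>u. H3 u v \<le> B * exp (- \<epsilon> * (norm u)\<^sup>2)" for v
    proof (intro exI allI)
      fix u :: "('a^'n) \<times> ('a^'m) \<times> ('a^'m)"
      have nu: "(norm u)\<^sup>2 = (norm (fst u))\<^sup>2 + (norm (fst (snd u)))\<^sup>2 + (norm (snd (snd u)))\<^sup>2"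
        by (cases u) (auto simp: norm_Pair)
      have "- V (fst u) (fst (snd u)) (snd (snd u)) \<le> K + (- \<epsilon> * (norm u)\<^sup>2)"
      proof -
        have A: "\<epsilon> * ((norm (fst u))\<^sup>2 + (norm (fst (snd u)))\<^sup>2 + (norm (snd (snd u)))\<^sup>2) - K \<le> V (fst u) (fst (snd u)) (snd (snd u))" by (rule VL)
        show ?thesis using A unfolding nu by linarith
      qed
      then show "H3 u v \<le> exp K * exp (- \<epsilon> * (norm u)\<^sup>2)"
        unfolding H3_def by (simp add: exp_add[symmetric])
    qed
  qed
  define Zi where "Zi = (\<integral>\<^sup>+xyz. ennreal (exp (- V (fst xyz) (fst (snd xyz)) (snd (snd xyz)))) \<partial>lborel)"
  have Zi_eq: "Zi = (\<integral>\<^sup>+u. ennreal (H3 u 0) \<partial>lborel)" unfolding Zi_def H3_def by simp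
  have Zfin: "Zi < \<infinity>" unfolding Zi_eq using PK3 by blast
  have Zpos: "0 < Zi" unfolding Zi_eq by (rule nn_integral_pos_eucl[OF H3m]) (simp add: H3_def)
  define Zr where "Zr = enn2real Zi"
  have Zr: "0 < Zr" unfolding Zr_def using Zfin Zpos by (simp add: enn2real_positive_iff less_top)
  have pz: "z_marginal \<eta> t \<sigma> f g z = exp (- C/2 * (norm z)\<^sup>2) * M z / Zr" for z
    unfolding z_marginal_def V_def[symmetric] Zi_def[symmetric] Zr_def[symmetric] num
    using Mpos[of z] by simp
  have ppos: "0 < z_marginal \<eta> t \<sigma> f g z" for z unfolding pz using Mpos[of z] Zr by simp
  have lnp: "- ln (z_marginal \<eta> t \<sigma> f g z) = C/2 * (norm z)\<^sup>2 - ln (M z) + ln Zr" for z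
    unfolding pz using Mpos[of z] Zr by (simp add: ln_mult ln_div)
  have sc: "strongly_convex C (\<lambda>z. - ln (z_marginal \<eta> t \<sigma> f g z))"
    unfolding strongly_convex_def
  proof (intro allI impI)
    fix u v :: "'a^'m" and s :: real assume s: "0 \<le> s \<and> s \<le> 1"
    have n: "(norm (s *\<^sub>R u + (1-s) *\<^sub>R v))\<^sup>2 = s * (norm u)\<^sup>2 + (1-s) * (norm v)\<^sup>2 - s*(1-s) * (norm (u - v))\<^sup>2"
      by (rule sq_comb)
    have key: "s * ln (M u) + (1-s) * ln (M v) \<le> ln (M (s *\<^sub>R u + (1-s) *\<^sub>R v))"
    proof (cases "s = 0 \<or> s = 1")
      case True then show ?thesis by auto
    next
      case False
      then have s': "0 < s" "s < 1" using s by auto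
      have "M u powr s * M v powr (1-s) \<le> M (s *\<^sub>R u + (1-s) *\<^sub>R v)"
        using LCM s' unfolding LCv_def by blast
      then have "ln (M u powr s * M v powr (1-s)) \<le> ln (M (s *\<^sub>R u + (1-s) *\<^sub>R v))"
      proof -
        have pp: "0 < M u powr s * M v powr (1-s)" using Mpos[of u] Mpos[of v] by simp
        show ?thesis using pp Mpos[of "s *\<^sub>R u + (1-s) *\<^sub>R v"] \<open>M u powr s * M v powr (1-s) \<le> M (s *\<^sub>R u + (1-s) *\<^sub>R v)\<close>
          by (subst ln_le_cancel_iff) auto
      qed
      moreover have "ln (M u powr s * M v powr (1-s)) = s * ln (M u) + (1-s) * ln (M v)"
        using Mpos[of u] Mpos[of v] by (simp add: ln_mult ln_powr)
      ultimately show ?thesis by simp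
    qed
    show "- ln (z_marginal \<eta> t \<sigma> f g (s *\<^sub>R u + (1 - s) *\<^sub>R v))
          \<le> s * - ln (z_marginal \<eta> t \<sigma> f g u) + (1 - s) * - ln (z_marginal \<eta> t \<sigma> f g v)
             - C / 2 * s * (1 - s) * (norm (u - v))\<^sup>2"
    proof -
      have E1: "C / 2 * (s * (norm u)\<^sup>2 + (1-s) * (norm v)\<^sup>2 - s*(1-s) * (norm (u - v))\<^sup>2)
          = s * (C / 2 * (norm u)\<^sup>2) + (1-s) * (C / 2 * (norm v)\<^sup>2) - C / 2 * s * (1 - s) * (norm (u - v))\<^sup>2"
        by (simp add: field_simps)
      have E2: "s * (C / 2 * (norm u)\<^sup>2 - ln (M u) + ln Zr) + (1 - s) * (C / 2 * (norm v)\<^sup>2 - ln (M v) + ln Zr)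
          = s * (C / 2 * (norm u)\<^sup>2) + (1-s) * (C / 2 * (norm v)\<^sup>2) - (s * ln (M u) + (1-s) * ln (M v)) + ln Zr"
        by (simp add: algebra_simps)
      show ?thesis unfolding lnp n E1 E2 using key by linarith
    qed
  qed
  have "strongly_log_concave C (z_marginal \<eta> t \<sigma> f g)"
    unfolding strongly_log_concave_def using Cpos ppos sc by blast
  then show ?thesis unfolding C_def .
qed


end
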